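(* Let $a_n$ denote the number of subrings of $\mathbb{Z}[t]/(t^3)$ of index $n$. Then \[ \sum_{n\le B} a_n\sim \frac{1}{12\,\zeta(2)}\,B\,(\ln B)^2\qquad\text{as } B\to\infty . \]
   Context: A subring of $\mathbb{Z}[t]/(t^3)$ means an additive subgroup of finite index that contains $1$ and is closed under multiplication. The index is its index as an additive subgroup. $\zeta$ denotes the Riemann zeta function. *)

theory Defs
  imports Complex_Main "HOL-Library.Landau_Symbols" "HOL-Library.Product_Plus"
begin

text \<open>The ring Z[t]/(t^3), modelled on int \<times> int \<times> int: the triple (a,b,c)
  stands for a + b t + c t^2.\<close>

type_synonym trunc3 = "int \<times> int \<times> int"

definition t3_one :: trunc3 where
  "t3_one = (1, 0, 0)"

definition t3_mult :: "trunc3 \<Rightarrow> trunc3 \<Rightarrow> trunc3" where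
  "t3_mult x y = (case x of (a0, a1, a2) \<Rightarrow> case y of (b0, b1, b2) \<Rightarrow>
      (a0 * b0, a0 * b1 + a1 * b0, a0 * b2 + a1 * b1 + a2 * b0))"

definition is_add_subgroup :: "trunc3 set \<Rightarrow> bool" where
  "is_add_subgroup S \<longleftrightarrow> 0 \<in> S \<and> (\<forall>x\<in>S. \<forall>y\<in>S. x + y \<in> S) \<and> (\<forall>x\<in>S. - x \<in> S)"

definition cosets3 :: "trunc3 set \<Rightarrow> trunc3 set set" where
  "cosets3 S = (\<lambda>x. (\<lambda>s. x + s) ` S) ` UNIV"

definition subgroup_index :: "trunc3 set \<Rightarrow> nat" where
  "subgroup_index S = card (cosets3 S)"

definition is_subring3 :: "trunc3 set \<Rightarrow> bool" where
  "is_subring3 S \<longleftrightarrow> is_add_subgroup S \<and> finite (cosets3 S) \<and> t3_one \<in> S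
     \<and> (\<forall>x\<in>S. \<forall>y\<in>S. t3_mult x y \<in> S)"

definition subring_count :: "nat \<Rightarrow> nat" where
  "subring_count n = card {S. is_subring3 S \<and> subgroup_index S = n}"

definition zeta_real :: "real \<Rightarrow> real" where
  "zeta_real s = (\<Sum>n. 1 / (real (Suc n)) powr s)"

end

theory Submission
  imports Defs "HOL-Analysis.Analysis" "HOL-Computational_Algebra.Squarefree" "HOL-Real_Asymp.Real_Asymp"
begin


definition Lat :: "int \<Rightarrow> int \<Rightarrow> int \<Rightarrow> trunc3 set" where
  "Lat b c x = {(a, y, z). b dvd y \<and> c dvd (z - (y div b) * x)}"

definition sm :: "int \<Rightarrow> trunc3 \<Rightarrow> trunc3" where
  "sm k p = (case p of (a, y, z) \<Rightarrow> (k * a, k * y, k * z))"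

lemma sm_simp [simp]: "sm k (a, y, z) = (k * a, k * y, k * z)"
  by (simp add: sm_def)

lemma subgroup_diff: "is_add_subgroup S \<Longrightarrow> p \<in> S \<Longrightarrow> q \<in> S \<Longrightarrow> p - q \<in> S"
  unfolding is_add_subgroup_def by (metis diff_conv_add_uminus)

lemma sm_mem: assumes "is_add_subgroup S" "p \<in> S" shows "sm k p \<in> S"
proof -
  obtain a y z where p: "p = (a, y, z)" by (cases p) auto
  have nat: "sm (int n) p \<in> S" for n
  proof (induction n)
    case 0 then show ?case using assms by (simp add: p is_add_subgroup_def zero_prod_def)
  next
    case (Suc n)
    have "sm (int (Suc n)) p = sm (int n) p + p" by (simp add: p algebra_simps)
    then show ?case using Suc assms unfolding is_add_subgroup_def by simp
  qed
  show ?thesis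
  proof (cases "k \<ge> 0")
    case True then show ?thesis using nat[of "nat k"] by simp
  next
    case False
    have "sm k p = - sm (int (nat (-k))) p" using False by (simp add: p)
    then show ?thesis using nat[of "nat (-k)"] assms unfolding is_add_subgroup_def by simp
  qed
qed

lemma coset_eq:
  assumes "is_add_subgroup S"
  shows "((\<lambda>s. p + s) ` S = (\<lambda>s. q + s) ` S) \<longleftrightarrow> p - q \<in> S"
proof
  assume h: "(\<lambda>s. p + s) ` S = (\<lambda>s. q + s) ` S"
  have "p \<in> (\<lambda>s. p + s) ` S" using assms unfolding is_add_subgroup_def by force
  then obtain s where "s \<in> S" "p = q + s" using h by auto
  then show "p - q \<in> S" by simp
next
  assume h: "p - q \<in> S"
  have h2: "q - p \<in> S" using h assms unfolding is_add_subgroup_def by (metis minus_diff_eq)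
  show "(\<lambda>s. p + s) ` S = (\<lambda>s. q + s) ` S"
  proof
    show "(\<lambda>s. p + s) ` S \<subseteq> (\<lambda>s. q + s) ` S"
    proof
      fix w assume "w \<in> (\<lambda>s. p + s) ` S"
      then obtain s where s: "s \<in> S" "w = p + s" by auto
      have "(p - q) + s \<in> S" using s h assms unfolding is_add_subgroup_def by blast
      moreover have "w = q + ((p - q) + s)" using s by simp
      ultimately show "w \<in> (\<lambda>s. q + s) ` S" by blast
    qed
    show "(\<lambda>s. q + s) ` S \<subseteq> (\<lambda>s. p + s) ` S"
    proof
      fix w assume "w \<in> (\<lambda>s. q + s) ` S"
      then obtain s where s: "s \<in> S" "w = q + s" by auto
      have "(q - p) + s \<in> S" using s h2 assms unfolding is_add_subgroup_def by blast
      moreover have "w = p + ((q - p) + s)" using s by simp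
      ultimately show "w \<in> (\<lambda>s. p + s) ` S" by blast
    qed
  qed
qed

lemma fin_idx_mult:
  assumes S: "is_add_subgroup S" and fin: "finite (cosets3 S)"
  shows "\<exists>n::int. n > 0 \<and> sm n v \<in> S"
proof -
  define K where "K = card (cosets3 S)"
  define f where "f = (\<lambda>j::nat. (\<lambda>s. sm (int j) v + s) ` S)"
  have sub: "f ` {0..K} \<subseteq> cosets3 S" unfolding f_def cosets3_def by auto
  have "\<not> inj_on f {0..K}"
  proof
    assume "inj_on f {0..K}"
    then have "card {0..K} \<le> card (cosets3 S)" using card_inj_on_le[OF _ sub fin] by blast
    then show False by (simp add: K_def)
  qed
  then obtain i j where ij: "i \<in> {0..K}" "j \<in> {0..K}" "i \<noteq> j" "f i = f j"
    unfolding inj_on_def by blast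
  have diff: "sm (int i) v - sm (int j) v \<in> S" using ij(4) coset_eq[OF S] unfolding f_def by blast
  obtain a y z where v: "v = (a, y, z)" by (cases v) auto
  show ?thesis
  proof (cases "i > j")
    case True
    have "sm (int i - int j) v = sm (int i) v - sm (int j) v" by (simp add: v algebra_simps)
    then show ?thesis using diff True by (intro exI[of _ "int i - int j"]) auto
  next
    case False
    then have "j > i" using ij(3) by simp
    have "sm (int j - int i) v = - (sm (int i) v - sm (int j) v)" by (simp add: v algebra_simps)
    moreover have "- (sm (int i) v - sm (int j) v) \<in> S" using diff S unfolding is_add_subgroup_def by blast
    ultimately show ?thesis using \<open>j > i\<close> by (intro exI[of _ "int j - int i"]) auto
  qed
qed

lemma int_subgroup:
  fixes I :: "int set"
  assumes "0 \<in> I" "\<And>x y. x \<in> I \<Longrightarrow> y \<in> I \<Longrightarrow> x - y \<in> I" "g0 \<in> I" "g0 > 0"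
  shows "\<exists>g>0. \<forall>y. y \<in> I \<longleftrightarrow> g dvd y"
proof -
  have neg: "x \<in> I \<Longrightarrow> - x \<in> I" for x using assms(1) assms(2)[of 0 x] by simp
  have add: "x \<in> I \<Longrightarrow> y \<in> I \<Longrightarrow> x + y \<in> I" for x y using assms(2)[of x "-y"] neg by simp
  have ex: "\<exists>n::nat. n > 0 \<and> int n \<in> I" using assms(3,4) by (intro exI[of _ "nat g0"]) auto
  define n where "n = (LEAST n::nat. n > 0 \<and> int n \<in> I)"
  have n: "n > 0" "int n \<in> I" using LeastI_ex[OF ex] unfolding n_def by auto
  have nmin: "m < n \<Longrightarrow> m > 0 \<Longrightarrow> int m \<notin> I" for m
    using not_less_Least[of m "\<lambda>n::nat. n > 0 \<and> int n \<in> I"] unfolding n_def by auto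
  have multn: "int k * int n \<in> I" for k
    by (induction k) (use assms(1) n add in \<open>auto simp: algebra_simps\<close>)
  have mult: "k * int n \<in> I" for k
  proof (cases "k \<ge> 0")
    case True then show ?thesis using multn[of "nat k"] by simp
  next
    case False then show ?thesis using neg[OF multn[of "nat (-k)"]] by simp
  qed
  show ?thesis
  proof (intro exI[of _ "int n"] conjI allI iffI)
    show "int n > 0" using n by simp
  next
    fix y assume y: "y \<in> I"
    have "y mod int n = y - (y div int n) * int n" by (simp add: mod_div_mult_eq minus_div_mult_eq_mod)
    then have "y mod int n \<in> I" using assms(2)[OF y mult] by simp
    moreover have "0 \<le> y mod int n" "y mod int n < int n" using n by auto
    ultimately have h: "y mod int n \<in> I" "0 \<le> y mod int n" "y mod int n < int n" by auto
    have "y mod int n = 0"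
    proof (rule ccontr)
      assume h4: "y mod int n \<noteq> 0"
      have "int (nat (y mod int n)) \<notin> I" by (rule nmin) (use h h4 in linarith)+
      then show False using h by simp
    qed
    then show "int n dvd y" by auto
  next
    fix y assume "int n dvd y"
    then obtain k where "y = int n * k" by auto
    then show "y \<in> I" using mult[of k] by (simp add: mult.commute)
  qed
qed

lemma Lat_mem: "b \<noteq> 0 \<Longrightarrow> (a, y, z) \<in> Lat b c x \<longleftrightarrow> b dvd y \<and> c dvd (z - (y div b) * x)"
  by (simp add: Lat_def)

lemma Lat_mem': assumes "b \<noteq> 0"
  shows "(a, y, z) \<in> Lat b c x \<longleftrightarrow> (\<exists>u v. y = u * b \<and> z = u * x + v * c)"
proof
  assume "(a, y, z) \<in> Lat b c x"
  then have h: "b dvd y" "c dvd (z - (y div b) * x)" using assms by (auto simp: Lat_mem)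
  then obtain v where v: "z - (y div b) * x = c * v" by (auto elim: dvdE)
  show "\<exists>u v. y = u * b \<and> z = u * x + v * c"
    by (rule exI[of _ "y div b"], rule exI[of _ v]) (use h v in \<open>auto simp: algebra_simps\<close>)
next
  assume "\<exists>u v. y = u * b \<and> z = u * x + v * c"
  then obtain u v where uv: "y = u * b" "z = u * x + v * c" by auto
  have "y div b = u" using uv assms by simp
  then show "(a, y, z) \<in> Lat b c x" using assms uv by (simp add: Lat_mem)
qed

lemma Lat_subgroup: assumes "b \<noteq> 0" shows "is_add_subgroup (Lat b c x)"
  unfolding is_add_subgroup_def
proof (intro conjI ballI)
  show "0 \<in> Lat b c x" using Lat_mem'[OF assms, of 0 0 0] by (auto simp: zero_prod_def)
next
  fix p q assume "p \<in> Lat b c x" "q \<in> Lat b c x"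
  then obtain a y z a' y' z' where pq: "p = (a, y, z)" "q = (a', y', z')"
    "(a, y, z) \<in> Lat b c x" "(a', y', z') \<in> Lat b c x" by (cases p, cases q) auto
  then obtain u v u' v' where "y = u * b" "z = u * x + v * c" "y' = u' * b" "z' = u' * x + v' * c"
    using Lat_mem'[OF assms] by meson
  then have e: "p + q = (a + a', (u + u') * b, (u + u') * x + (v + v') * c)"
    unfolding pq by (simp add: algebra_simps)
  show "p + q \<in> Lat b c x" unfolding e Lat_mem'[OF assms] by blast
next
  fix p assume "p \<in> Lat b c x"
  then obtain a y z where pq: "p = (a, y, z)" "(a, y, z) \<in> Lat b c x" by (cases p) auto
  then obtain u v where "y = u * b" "z = u * x + v * c"
    using Lat_mem'[OF assms] by meson
  then have e: "- p = (- a, (- u) * b, (- u) * x + (- v) * c)"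
    unfolding pq by (simp add: algebra_simps)
  show "- p \<in> Lat b c x" unfolding e Lat_mem'[OF assms] by blast
qed

lemma Lat_cosets:
  assumes b: "b > 0" and c: "c > 0"
  shows "finite (cosets3 (Lat b c x)) \<and> card (cosets3 (Lat b c x)) = nat (b * c)"
proof -
  define L where "L = Lat b c x"
  have G: "is_add_subgroup L" unfolding L_def using b by (intro Lat_subgroup) auto
  define f where "f = (\<lambda>(i::int, j::int). (\<lambda>s. (0::int, i, j) + s) ` L)"
  have eq: "cosets3 L = f ` ({0..<b} \<times> {0..<c})"
  proof
    show "f ` ({0..<b} \<times> {0..<c}) \<subseteq> cosets3 L" unfolding f_def cosets3_def by auto
  next
    show "cosets3 L \<subseteq> f ` ({0..<b} \<times> {0..<c})"
    proof
      fix C assume "C \<in> cosets3 L"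
      then obtain p0 p1 p2 where C: "C = (\<lambda>s. (p0, p1, p2) + s) ` L" unfolding cosets3_def by auto
      define i where "i = p1 mod b"
      define j where "j = (p2 - (p1 div b) * x) mod c"
      have "(p0, p1, p2) - (0, i, j) \<in> L"
      proof -
        have "(p0, p1, p2) - (0, i, j) = (p0, (p1 div b) * b, (p1 div b) * x + ((p2 - (p1 div b) * x) div c) * c)"
          unfolding i_def j_def
          using div_mult_mod_eq[of p1 b] div_mult_mod_eq[of "p2 - (p1 div b) * x" c] by (simp add: algebra_simps)
        then show ?thesis unfolding L_def using Lat_mem'[of b] b by auto
      qed
      then have "C = f (i, j)" unfolding C f_def using coset_eq[OF G] by simp
      moreover have "(i, j) \<in> {0..<b} \<times> {0..<c}" unfolding i_def j_def using b c by auto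
      ultimately show "C \<in> f ` ({0..<b} \<times> {0..<c})" by blast
    qed
  qed
  have inj: "inj_on f ({0..<b} \<times> {0..<c})"
  proof (rule inj_onI)
    fix p p' assume h0: "p \<in> {0..<b} \<times> {0..<c}" "p' \<in> {0..<b} \<times> {0..<c}" "f p = f p'"
    obtain i j i' j' where pp: "p = (i, j)" "p' = (i', j')" by (cases p, cases p') auto
    have h: "(i, j) \<in> {0..<b} \<times> {0..<c}" "(i', j') \<in> {0..<b} \<times> {0..<c}"
      "f (i, j) = f (i', j')" using h0 pp by auto
    then have "(0, i, j) - (0, i', j') \<in> L" unfolding f_def using coset_eq[OF G] by simp
    then have m: "b dvd (i - i')" "c dvd ((j - j') - ((i - i') div b) * x)" unfolding L_def using b
      by (auto simp: Lat_mem)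
    have "i = i'"
    proof -
      have "\<bar>i - i'\<bar> < b" using h by auto
      then show ?thesis using dvd_imp_le_int[of "i - i'" b] m(1) b by (cases "i - i' = 0") auto
    qed
    then have "c dvd (j - j')" using m by simp
    moreover have "\<bar>j - j'\<bar> < c" using h by auto
    ultimately have "j = j'" using dvd_imp_le_int[of "j - j'" c] c by (cases "j - j' = 0") auto
    with \<open>i = i'\<close> show "p = p'" using pp by simp
  qed
  have "card (cosets3 L) = card ({0..<b} \<times> {0..<c})" unfolding eq by (rule card_image[OF inj])
  also have "\<dots> = nat (b * c)" using b c by (simp add: card_cartesian_product nat_mult_distrib)
  finally show ?thesis unfolding L_def[symmetric] eq by simp
qed

lemma Lat_subring:
  assumes b: "b > 0" and c: "c > 0"
  shows "is_subring3 (Lat b c x) \<longleftrightarrow> c dvd b^2"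
proof -
  have b0: "b \<noteq> 0" using b by simp
  have one: "t3_one \<in> Lat b c x" unfolding t3_one_def using b0 by (simp add: Lat_mem)
  have elt: "(0, b, x) \<in> Lat b c x" using b0 by (simp add: Lat_mem)
  have "(\<forall>p\<in>Lat b c x. \<forall>q\<in>Lat b c x. t3_mult p q \<in> Lat b c x) \<longleftrightarrow> c dvd b^2"
  proof
    assume h: "\<forall>p\<in>Lat b c x. \<forall>q\<in>Lat b c x. t3_mult p q \<in> Lat b c x"
    have "t3_mult (0, b, x) (0, b, x) \<in> Lat b c x" using h elt by blast
    then show "c dvd b^2" using b0 by (simp add: t3_mult_def Lat_mem power2_eq_square)
  next
    assume "c dvd b^2"
    then obtain k where k: "b^2 = c * k" by (auto elim: dvdE)
    show "\<forall>p\<in>Lat b c x. \<forall>q\<in>Lat b c x. t3_mult p q \<in> Lat b c x"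
    proof (intro ballI)
      fix p q assume "p \<in> Lat b c x" "q \<in> Lat b c x"
      then obtain a y z a' y' z' where pq: "p = (a, y, z)" "q = (a', y', z')"
        "(a, y, z) \<in> Lat b c x" "(a', y', z') \<in> Lat b c x" by (cases p, cases q) auto
      then obtain u v u' v' where uv: "y = u * b" "z = u * x + v * c" "y' = u' * b" "z' = u' * x + v' * c"
        using Lat_mem'[OF b0] by meson
      have e: "t3_mult p q = (a * a', (a * u' + u * a') * b,
                 (a * u' + u * a') * x + (a * v' + v * a' + u * u' * k) * c)"
        unfolding pq t3_mult_def using uv k by (simp add: algebra_simps power2_eq_square)
      show "t3_mult p q \<in> Lat b c x" unfolding e Lat_mem'[OF b0] by blast
    qed
  qed
  moreover have "is_add_subgroup (Lat b c x)" using b0 by (rule Lat_subgroup)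
  moreover have "finite (cosets3 (Lat b c x))" using Lat_cosets[OF b c] by simp
  ultimately show ?thesis using one unfolding is_subring3_def by blast
qed

lemma Lat_inj:
  assumes "b > 0" "c > 0" "b' > 0" "c' > 0" "0 \<le> x" "x < c" "0 \<le> x'" "x' < c'"
    and eq: "Lat b c x = Lat b' c' x'"
  shows "b = b' \<and> c = c' \<and> x = x'"
proof -
  have "(0, b, x) \<in> Lat b c x" using assms(1) by (simp add: Lat_mem)
  then have e1: "(0, b, x) \<in> Lat b' c' x'" using eq by simp
  have "(0, b', x') \<in> Lat b' c' x'" using assms(3) by (simp add: Lat_mem)
  then have e2: "(0, b', x') \<in> Lat b c x" using eq by simp
  have "b' dvd b" using e1 assms(3) by (simp add: Lat_mem)
  moreover have "b dvd b'" using e2 assms(1) by (simp add: Lat_mem)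
  ultimately have bb: "b = b'" using assms by (simp add: zdvd_antisym_nonneg)
  have "(0, 0, c) \<in> Lat b c x" using assms(1) by (simp add: Lat_mem)
  then have f1: "(0, 0, c) \<in> Lat b' c' x'" using eq by simp
  have "(0, 0, c') \<in> Lat b' c' x'" using assms(3) by (simp add: Lat_mem)
  then have f2: "(0, 0, c') \<in> Lat b c x" using eq by simp
  have "c' dvd c" using f1 assms(3) by (simp add: Lat_mem)
  moreover have "c dvd c'" using f2 assms(1) by (simp add: Lat_mem)
  ultimately have cc: "c = c'" using assms by (simp add: zdvd_antisym_nonneg)
  have "c dvd (x - x')" using e1 assms(1) bb cc by (simp add: Lat_mem)
  moreover have "\<bar>x - x'\<bar> < c" using assms cc by auto
  ultimately have "x = x'" using dvd_imp_le_int[of "x - x'" c] assms by (cases "x - x' = 0") auto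
  then show ?thesis using bb cc by simp
qed

lemma subring_Lat:
  assumes S: "is_subring3 S"
  shows "\<exists>b c x. b > 0 \<and> c > 0 \<and> 0 \<le> x \<and> x < c \<and> S = Lat b c x"
proof -
  have G: "is_add_subgroup S" and fin: "finite (cosets3 S)" and one: "(1, 0, 0) \<in> S"
    using S unfolding is_subring3_def t3_one_def by auto
  have z0: "(0, 0, 0) \<in> S" using G unfolding is_add_subgroup_def by (simp add: zero_prod_def)
  have diff: "p \<in> S \<Longrightarrow> q \<in> S \<Longrightarrow> p - q \<in> S" for p q using subgroup_diff[OF G] .
  have add: "p \<in> S \<Longrightarrow> q \<in> S \<Longrightarrow> p + q \<in> S" for p q using G unfolding is_add_subgroup_def by blast
  obtain n1 where n1: "n1 > 0" "sm n1 (0, 1, 0) \<in> S" using fin_idx_mult[OF G fin] by blast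
  obtain n2 where n2: "n2 > 0" "sm n2 (0, 0, 1) \<in> S" using fin_idx_mult[OF G fin] by blast
  define I1 where "I1 = {y. \<exists>a z. (a, y, z) \<in> S}"
  define I2 where "I2 = {z. (0, 0, z) \<in> S}"
  have "\<exists>g>0. \<forall>y. y \<in> I1 \<longleftrightarrow> g dvd y"
  proof (rule int_subgroup)
    show "0 \<in> I1" using z0 unfolding I1_def by blast
    show "n1 \<in> I1" using n1 unfolding I1_def by auto
    show "n1 > 0" by fact
    fix y y' assume "y \<in> I1" "y' \<in> I1"
    then obtain a z a' z' where "(a, y, z) \<in> S" "(a', y', z') \<in> S" unfolding I1_def by auto
    then have "(a, y, z) - (a', y', z') \<in> S" by (rule diff)
    then show "y - y' \<in> I1" unfolding I1_def by auto
  qed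
  then obtain b where b: "b > 0" "\<And>y. y \<in> I1 \<longleftrightarrow> b dvd y" by blast
  have "\<exists>g>0. \<forall>y. y \<in> I2 \<longleftrightarrow> g dvd y"
  proof (rule int_subgroup)
    show "0 \<in> I2" using z0 unfolding I2_def by blast
    show "n2 \<in> I2" using n2 unfolding I2_def by auto
    show "n2 > 0" by fact
    fix y y' assume "y \<in> I2" "y' \<in> I2"
    then have "(0, 0, y) - (0, 0, y') \<in> S" unfolding I2_def by (intro diff) auto
    then show "y - y' \<in> I2" unfolding I2_def by auto
  qed
  then obtain c where c: "c > 0" "\<And>y. y \<in> I2 \<longleftrightarrow> c dvd y" by blast
  have cS: "(0, 0, c * k) \<in> S" for k using c(2)[of "c * k"] unfolding I2_def by auto
  obtain a0 z0 where az: "(a0, b, z0) \<in> S" using b(2)[of b] unfolding I1_def by auto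
  define x where "x = z0 mod c"
  have "(a0, b, z0) - sm a0 (1, 0, 0) - (0, 0, c * (z0 div c)) \<in> S"
    by (intro diff az sm_mem[OF G one] cS)
  moreover have "(a0, b, z0) - sm a0 (1, 0, 0) - (0, 0, c * (z0 div c)) = (0, b, x)"
    unfolding x_def by (simp add: minus_mult_div_eq_mod)
  ultimately have bx: "(0, b, x) \<in> S" by simp
  have "S = Lat b c x"
  proof
    show "S \<subseteq> Lat b c x"
    proof
      fix p assume pS: "p \<in> S"
      obtain a y z where p: "p = (a, y, z)" by (cases p) auto
      have "y \<in> I1" using pS p unfolding I1_def by auto
      then obtain u where u: "y = b * u" using b(2) by (auto elim: dvdE)
      have "p - sm a (1, 0, 0) - sm u (0, b, x) \<in> S"
        by (intro diff pS sm_mem[OF G one] sm_mem[OF G bx])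
      moreover have "p - sm a (1, 0, 0) - sm u (0, b, x) = (0, 0, z - u * x)"
        unfolding p using u by (simp add: algebra_simps)
      ultimately have "c dvd (z - u * x)" using c(2) unfolding I2_def by auto
      then show "p \<in> Lat b c x" unfolding p using b u by (simp add: Lat_mem mult.commute)
    qed
  next
    show "Lat b c x \<subseteq> S"
    proof
      fix p assume "p \<in> Lat b c x"
      then obtain a y z where p: "p = (a, y, z)" "(a, y, z) \<in> Lat b c x" by (cases p) auto
      then obtain u v where uv: "y = u * b" "z = u * x + v * c" using Lat_mem'[of b] b by (metis less_irrefl)
      have "sm a (1, 0, 0) + sm u (0, b, x) + (0, 0, c * v) \<in> S"
        by (intro add sm_mem[OF G one] sm_mem[OF G bx] cS)
      moreover have "sm a (1, 0, 0) + sm u (0, b, x) + (0, 0, c * v) = p"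
        unfolding p using uv by (simp add: algebra_simps)
      ultimately show "p \<in> S" by simp
    qed
  qed
  moreover have "0 \<le> x" "x < c" unfolding x_def using c by auto
  ultimately show ?thesis using b c by blast
qed

lemma sqf_dvd_sq:
  fixes m y :: nat
  assumes sq: "squarefree m" and d: "m dvd y^2"
  shows "m dvd y"
proof (cases "y = 0")
  case True then show ?thesis by simp
next
  case False
  have m0: "m \<noteq> 0" using sq by (metis not_squarefree_0)
  define g where "g = gcd m y"
  have g0: "g > 0" using m0 unfolding g_def by simp
  define m1 where "m1 = m div g"
  define y1 where "y1 = y div g"
  have mm: "m = g * m1" and yy: "y = g * y1" unfolding m1_def y1_def g_def by auto
  have cop: "coprime m1 y1" unfolding m1_def y1_def g_def using m0 by (intro div_gcd_coprime) auto
  have "g * m1 dvd (g * y1)^2" using d mm yy by simp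
  then have "g * m1 dvd g * (g * y1^2)" by (simp add: power2_eq_square algebra_simps)
  then have "m1 dvd g * y1^2" using g0 by simp
  moreover have "coprime m1 (y1^2)" using cop by simp
  ultimately have "m1 dvd g" using coprime_dvd_mult_left_iff by blast
  then have "m1^2 dvd m" unfolding mm by (simp add: power2_eq_square mult.commute)
  then have "m1 dvd 1" using sq squarefreeD by blast
  then have "m1 = 1" by simp
  then show ?thesis using mm yy by simp
qed

lemma sqf_unique:
  fixes m m' k k' :: nat
  assumes sq: "squarefree m" "squarefree m'" and k: "k > 0" "k' > 0"
    and eq: "m * k^2 = m' * k'^2"
  shows "k = k' \<and> m = m'"
proof -
  define g where "g = gcd k k'"
  have g0: "g > 0" using k unfolding g_def by simp
  define a where "a = k div g"
  define a' where "a' = k' div g"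
  have kk: "k = g * a" and kk': "k' = g * a'" unfolding a_def a'_def g_def by auto
  have cop: "coprime a a'" unfolding a_def a'_def g_def using k by (intro div_gcd_coprime) auto
  have "(m * a^2) * g^2 = (m' * a'^2) * g^2" using eq kk kk' by (simp add: power_mult_distrib algebra_simps)
  then have eq2: "m * a^2 = m' * a'^2" using g0 by simp
  have c2: "coprime (a^2) (a'^2)" using cop by simp
  have "a^2 dvd m' * a'^2" using eq2 by (metis dvd_triv_right)
  then have "a^2 dvd m'" using c2 coprime_dvd_mult_left_iff by blast
  then have "a dvd 1" using sq(2) squarefreeD by blast
  then have a1: "a = 1" by simp
  have "a'^2 dvd m * a^2" using eq2 by (metis dvd_triv_right)
  then have "a'^2 dvd m" using c2 coprime_dvd_mult_left_iff coprime_commute by blast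
  then have "a' dvd 1" using sq(1) squarefreeD by blast
  then have a1': "a' = 1" by simp
  show ?thesis using eq2 kk kk' a1 a1' by simp
qed

lemma sqf_exists:
  fixes c :: nat
  assumes "c > 0"
  shows "\<exists>m k. squarefree m \<and> k > 0 \<and> c = m * k^2"
proof -
  have "c = squarefree_part c * square_part c ^ 2" by (rule squarefree_decompose)
  moreover have "square_part c > 0" using assms by (metis gr0I not_gr0 square_part_0_iff)
  ultimately show ?thesis by (intro exI[of _ "squarefree_part c"] exI[of _ "square_part c"]) simp
qed


definition U2 :: "nat \<Rightarrow> (nat \<times> nat) set" where
  "U2 N = {(b, c). 0 < b \<and> 0 < c \<and> b * c \<le> N \<and> c dvd b^2}"

definition U3 :: "nat \<Rightarrow> ((nat \<times> nat) \<times> nat) set" where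
  "U3 N = Sigma (U2 N) (\<lambda>p. {..<snd p})"

definition Phi :: "(nat \<times> nat) \<times> nat \<Rightarrow> trunc3 set" where
  "Phi t = Lat (int (fst (fst t))) (int (snd (fst t))) (int (snd t))"

lemma U2_fin: "finite (U2 N)"
proof (rule finite_subset)
  show "U2 N \<subseteq> {0..N} \<times> {0..N}"
  proof
    fix p assume "p \<in> U2 N"
    then obtain b c where p: "p = (b, c)" "0 < b" "0 < c" "b * c \<le> N" unfolding U2_def by auto
    have "b \<le> b * c" "c \<le> b * c" using p by auto
    then have "b \<le> N" "c \<le> N" using p(4) by linarith+
    then show "p \<in> {0..N} \<times> {0..N}" using p by auto
  qed
qed auto

lemma U3_fin: "finite (U3 N)"
  unfolding U3_def using U2_fin by auto

lemma subring_count_eq: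
  assumes n: "1 \<le> n" and nN: "n \<le> N"
  shows "subring_count n = card {t \<in> U3 N. fst (fst t) * snd (fst t) = n}"
proof -
  define A where "A = {t \<in> U3 N. fst (fst t) * snd (fst t) = n}"
  have "{S. is_subring3 S \<and> subgroup_index S = n} = Phi ` A"
  proof
    show "Phi ` A \<subseteq> {S. is_subring3 S \<and> subgroup_index S = n}"
    proof
      fix S assume "S \<in> Phi ` A"
      then obtain b c x where t: "((b, c), x) \<in> A" "S = Phi ((b, c), x)" by auto
      then have h: "0 < b" "0 < c" "c dvd b^2" "b * c = n" unfolding A_def U3_def U2_def by auto
      have "int c dvd (int b)^2" using h(3) by (metis of_nat_dvd_iff of_nat_power)
      then have "is_subring3 S" using Lat_subring[of "int b" "int c" "int x"] h t(2) by (simp add: Phi_def)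
      moreover have "subgroup_index S = n" using Lat_cosets[of "int b" "int c" "int x"] h t(2)
        unfolding subgroup_index_def Phi_def by (simp add: nat_mult_distrib)
      ultimately show "S \<in> {S. is_subring3 S \<and> subgroup_index S = n}" by simp
    qed
  next
    show "{S. is_subring3 S \<and> subgroup_index S = n} \<subseteq> Phi ` A"
    proof
      fix S assume "S \<in> {S. is_subring3 S \<and> subgroup_index S = n}"
      then have S: "is_subring3 S" "subgroup_index S = n" by auto
      obtain b c x where h: "b > 0" "c > 0" "0 \<le> x" "x < c" "S = Lat b c x"
        using subring_Lat[OF S(1)] by blast
      have "c dvd b^2" using Lat_subring[OF h(1,2)] S(1) h(5) by simp
      then have dv: "nat c dvd (nat b)^2" using h by (metis nat_power_eq of_nat_dvd_iff int_nat_eq zero_le_power linorder_not_le order_less_imp_le)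
      have "nat (b * c) = n" using Lat_cosets[OF h(1,2)] S(2) h(5) unfolding subgroup_index_def by simp
      then have bc: "nat b * nat c = n" using h by (simp add: nat_mult_distrib)
      have "((nat b, nat c), nat x) \<in> A" unfolding A_def U3_def U2_def using h dv bc nN by auto
      moreover have "S = Phi ((nat b, nat c), nat x)" unfolding Phi_def using h by simp
      ultimately show "S \<in> Phi ` A" by blast
    qed
  qed
  moreover have "inj_on Phi A"
  proof (rule inj_onI)
    fix t t' assume tt: "t \<in> A" "t' \<in> A" "Phi t = Phi t'"
    obtain b c x b' c' x' where tp: "t = ((b, c), x)" "t' = ((b', c'), x')" by (metis prod.collapse)
    have h: "0 < b" "0 < c" "x < c" "0 < b'" "0 < c'" "x' < c'" using tt(1,2) unfolding tp A_def U3_def U2_def by auto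
    have "int b = int b' \<and> int c = int c' \<and> int x = int x'"
      by (rule Lat_inj) (use h tt(3) in \<open>auto simp: tp Phi_def\<close>)
    then show "t = t'" using tp by simp
  qed
  ultimately show ?thesis unfolding subring_count_def A_def by (simp add: card_image)
qed

lemma sum_subring_count:
  "(\<Sum>n\<in>{1..N}. subring_count n) = (\<Sum>p\<in>U2 N. snd p)"
proof -
  define f where "f = (\<lambda>t :: (nat \<times> nat) \<times> nat. fst (fst t) * snd (fst t))"
  have "(\<Sum>n\<in>{1..N}. subring_count n) = (\<Sum>n\<in>{1..N}. card {t \<in> U3 N. f t = n})"
    by (intro sum.cong refl) (simp add: subring_count_eq f_def)
  also have "\<dots> = (\<Sum>n\<in>{1..N}. sum (\<lambda>_. 1) {t \<in> U3 N. f t = n})" by simp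
  also have "\<dots> = sum (\<lambda>_. 1) (U3 N)"
  proof (rule sum.group)
    show "finite (U3 N)" by (rule U3_fin)
    show "finite {1..N}" by simp
    show "f ` U3 N \<subseteq> {1..N}" unfolding f_def U3_def U2_def by (auto simp: Suc_le_eq)
  qed
  also have "\<dots> = card (U3 N)" by simp
  also have "\<dots> = (\<Sum>p\<in>U2 N. card {..<snd p})" unfolding U3_def using U2_fin by (intro card_SigmaI) auto
  finally show ?thesis by simp
qed

definition PP :: "nat \<Rightarrow> (nat \<times> nat) set" where
  "PP N = {(k, m). 0 < k \<and> 0 < m \<and> squarefree m \<and> m^2 * k^3 \<le> N}"

lemma PP_fin: "finite (PP N)"
proof (rule finite_subset)
  show "PP N \<subseteq> {0..N} \<times> {0..N}"
  proof
    fix p assume "p \<in> PP N"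
    then obtain k m where p: "p = (k, m)" "0 < k" "0 < m" "m^2 * k^3 \<le> N" unfolding PP_def by auto
    have e1: "m^2 * k^3 = k * (m^2 * k^2)" "m^2 * k^3 = m * (m * k^3)"
      by (simp_all add: power2_eq_square power3_eq_cube)
    have "k \<le> m^2 * k^3" unfolding e1(1) using p by simp
    moreover have "m \<le> m^2 * k^3" unfolding e1(2) using p by simp
    ultimately have "k \<le> N" "m \<le> N" using p(4) by linarith+
    then show "p \<in> {0..N} \<times> {0..N}" using p by auto
  qed
qed auto

lemma U2_param:
  "(\<Sum>p\<in>U2 N. snd p) = (\<Sum>p\<in>PP N. snd p * fst p^2 * (N div (snd p^2 * fst p^3)))"
proof -
  define V where "V = Sigma (PP N) (\<lambda>p. {1..N div (snd p^2 * fst p^3)})"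
  define g where "g = (\<lambda>((k::nat, m::nat), d::nat). (d * m * k, m * k^2))"
  have bij: "bij_betw g V (U2 N)"
  proof (rule bij_betw_imageI)
    show "inj_on g V"
    proof (rule inj_onI)
      fix t t' assume tt: "t \<in> V" "t' \<in> V" "g t = g t'"
      obtain k m d k' m' d' where tp: "t = ((k, m), d)" "t' = ((k', m'), d')" by (metis prod.collapse)
      have h: "0 < k" "0 < m" "squarefree m" "0 < k'" "0 < m'" "squarefree m'" "0 < d"
        using tt(1,2) unfolding tp V_def PP_def by auto
      have e: "d * m * k = d' * m' * k'" "m * k^2 = m' * k'^2" using tt(3) unfolding tp g_def by auto
      have "k = k' \<and> m = m'" using sqf_unique[OF h(3,6) h(1,4) e(2)] .
      then have "d = d'" using e(1) h by simp
      then show "t = t'" using tp \<open>k = k' \<and> m = m'\<close> by simp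
    qed
  next
    show "g ` V = U2 N"
    proof
      show "g ` V \<subseteq> U2 N"
      proof
        fix u assume "u \<in> g ` V"
        then obtain k m d where t: "((k, m), d) \<in> V" "u = g ((k, m), d)" by auto
        have h: "0 < k" "0 < m" "0 < d" "d \<le> N div (m^2 * k^3)" using t(1) unfolding V_def PP_def by auto
        have "d * (m^2 * k^3) \<le> N" using h(4) h(1,2) by (simp add: less_eq_div_iff_mult_less_eq)
        moreover have "d * m * k * (m * k^2) = d * (m^2 * k^3)" by (simp add: power2_eq_square power3_eq_cube)
        ultimately have bcN: "d * m * k * (m * k^2) \<le> N" by (simp only:)
        have "(d * m * k)^2 = (m * k^2) * (d^2 * m)" by (simp add: power2_eq_square algebra_simps)
        then show "u \<in> U2 N" unfolding t(2) g_def U2_def using h bcN by (auto intro: dvdI)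
      qed
    next
      show "U2 N \<subseteq> g ` V"
      proof
        fix u assume "u \<in> U2 N"
        then obtain b c where u: "u = (b, c)" "0 < b" "0 < c" "b * c \<le> N" "c dvd b^2" unfolding U2_def by auto
        obtain m k where mk: "squarefree m" "k > 0" "c = m * k^2" using sqf_exists[OF u(3)] by blast
        have m0: "m > 0" using mk u(3) by (metis gr0I mult_is_0)
        have "k^2 dvd b^2" using u(5) mk(3) by (metis dvd_mult_right)
        then have "k dvd b" by (simp add: pow_divides_pow_iff)
        then obtain b1 where b1: "b = k * b1" by (auto elim: dvdE)
        have "m * k^2 dvd k^2 * b1^2" using u(5) mk(3) b1 by (simp add: power_mult_distrib)
        then have "m dvd b1^2" using mk(2) by (simp add: mult.commute)
        then have "m dvd b1" using sqf_dvd_sq[OF mk(1)] by blast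
        then obtain d where d: "b1 = m * d" by (auto elim: dvdE)
        have bb: "b = d * m * k" using b1 d by simp
        have d0: "d > 0" using bb u(2) by (metis gr0I mult_is_0)
        have "d * (m^2 * k^3) = b * c" using bb mk(3) by (simp add: power2_eq_square power3_eq_cube)
        then have "d \<le> N div (m^2 * k^3)" using u(4) mk(2) m0 by (simp add: less_eq_div_iff_mult_less_eq)
        moreover have "m^2 * k^3 \<le> d * (m^2 * k^3)" using d0 by simp
        ultimately have "((k, m), d) \<in> V" unfolding V_def PP_def using mk m0 d0 u(4)
          \<open>d * (m^2 * k^3) = b * c\<close> by auto
        moreover have "u = g ((k, m), d)" unfolding g_def u(1) bb mk(3) by simp
        ultimately show "u \<in> g ` V" by blast
      qed
    qed
  qed
  have "(\<Sum>p\<in>U2 N. snd p) = (\<Sum>t\<in>V. snd (g t))"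
    using sum.reindex_bij_betw[OF bij, of snd] by simp
  also have "\<dots> = (\<Sum>t\<in>V. case_prod (\<lambda>p d. snd p * fst p^2) t)"
    by (intro sum.cong refl) (auto simp: g_def)
  also have "\<dots> = (\<Sum>p\<in>PP N. \<Sum>d\<in>{1..N div (snd p^2 * fst p^3)}. snd p * fst p^2)"
    unfolding V_def using PP_fin by (subst sum.Sigma) auto
  also have "\<dots> = (\<Sum>p\<in>PP N. snd p * fst p^2 * (N div (snd p^2 * fst p^3)))"
    by (intro sum.cong refl) auto
  finally show ?thesis .
qed



lemma zeta2_sums: "(\<lambda>n. 1 / (real n + 1)^2) sums zeta_real 2"
proof -
  have e: "(\<lambda>n. 1 / real (Suc n) powr 2) = (\<lambda>n. 1 / (real n + 1)^2)"
  proof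
    fix n :: nat
    have "real (Suc n) powr 2 = real (Suc n) ^ 2" by (subst powr_realpow[symmetric]) auto
    then show "1 / real (Suc n) powr 2 = 1 / (real n + 1)^2" by simp
  qed
  have "(\<lambda>n. 1 / (real n + 1)^2) sums (pi^2 / 6)" using inverse_squares_sums by (simp add: add.commute)
  then have "pi^2 / 6 = zeta_real 2" unfolding zeta_real_def e by (simp add: sums_iff)
  then show ?thesis using \<open>(\<lambda>n. 1 / (real n + 1)^2) sums (pi^2 / 6)\<close> by metis
qed

lemma zeta2_bounds: "1 \<le> zeta_real 2" "zeta_real 2 < 2"
proof -
  have s: "(\<lambda>n. 1 / (real n + 1)^2) sums zeta_real 2" by (rule zeta2_sums)
  have "(\<Sum>n<1. 1 / (real n + 1)^2) \<le> zeta_real 2"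
    using sum_le_suminf[OF sums_summable[OF s], of "{..<1}"] s by (simp add: sums_iff)
  then show "1 \<le> zeta_real 2" by simp
  have "(\<lambda>n. 1 / (real n + 1)^2) sums (pi^2 / 6)" using inverse_squares_sums by (simp add: add.commute)
  then have z: "zeta_real 2 = pi^2 / 6" using s sums_unique2 by blast
  have "pi \<le> 3.2" using pi_approx by simp
  then have p2: "pi^2 \<le> 3.2^2" by (intro power_mono) auto
  have "pi^2 < 12" using p2 by (simp add: power2_eq_square)
  then show "zeta_real 2 < 2" unfolding z by simp
qed

lemma partial_sq_eq: "(\<Sum>n<M. 1 / (real n + 1)^2) = (\<Sum>q\<in>{1..M}. 1 / real q ^ 2)"
  by (induction M) (auto simp: add.commute)

lemma tele_sq:
  assumes "1 \<le> M" "M \<le> M'"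
  shows "(\<Sum>q\<in>{1..M'}. 1 / real q ^ 2) - (\<Sum>q\<in>{1..M}. 1 / real q ^ 2) \<le> 1 / M - 1 / M'"
  using assms(2)
proof (induction M' rule: dec_induct)
  case base then show ?case by simp
next
  case (step n)
  have n1: "real n \<ge> 1" using assms step by simp
  have "1 / (real n + 1) ^ 2 \<le> 1 / (real n * (real n + 1))"
    using n1 by (intro divide_left_mono) (auto simp: power2_eq_square intro!: mult_right_mono)
  moreover have "1 / real n - 1 / (real n + 1) = 1 / (real n * (real n + 1))"
    using n1 by (simp add: field_simps)
  ultimately have "1 / real (Suc n) ^ 2 \<le> 1 / real n - 1 / real (Suc n)" by (simp add: add.commute)
  moreover have "(\<Sum>q\<in>{1..Suc n}. 1 / real q ^ 2) = (\<Sum>q\<in>{1..n}. 1 / real q ^ 2) + 1 / real (Suc n) ^ 2"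
    by simp
  ultimately show ?case using step.IH by simp
qed

lemma partial_sq_bounds:
  shows "(\<Sum>q\<in>{1..M}. 1 / real q ^ 2) \<le> zeta_real 2"
    and "1 \<le> M \<Longrightarrow> zeta_real 2 - (\<Sum>q\<in>{1..M}. 1 / real q ^ 2) \<le> 1 / M"
proof -
  have s: "(\<lambda>n. 1 / (real n + 1)^2) sums zeta_real 2" by (rule zeta2_sums)
  then have L: "(\<lambda>n. \<Sum>q\<in>{1..n}. 1 / real q ^ 2) \<longlonglongrightarrow> zeta_real 2"
    unfolding sums_def partial_sq_eq .
  show "(\<Sum>q\<in>{1..M}. 1 / real q ^ 2) \<le> zeta_real 2"
  proof (rule LIMSEQ_le_const[OF L], intro exI allI impI)
    fix n assume "M \<le> n"
    then show "(\<Sum>q\<in>{1..M}. 1 / real q ^ 2) \<le> (\<Sum>q\<in>{1..n}. 1 / real q ^ 2)"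
      by (intro sum_mono2) auto
  qed
  assume M: "1 \<le> M"
  have "zeta_real 2 \<le> (\<Sum>q\<in>{1..M}. 1 / real q ^ 2) + 1 / M"
  proof (rule LIMSEQ_le_const2[OF L], intro exI allI impI)
    fix n assume "M \<le> n"
    then show "(\<Sum>q\<in>{1..n}. 1 / real q ^ 2) \<le> (\<Sum>q\<in>{1..M}. 1 / real q ^ 2) + 1 / M"
    proof -
      have "0 \<le> 1 / real n" by simp
      then show ?thesis using tele_sq[OF M \<open>M \<le> n\<close>] by linarith
    qed
  qed
  then show "zeta_real 2 - (\<Sum>q\<in>{1..M}. 1 / real q ^ 2) \<le> 1 / M" by simp
qed

lemma ln_le_2sqrt: "x > 0 \<Longrightarrow> ln x \<le> 2 * sqrt x"
proof -
  assume x: "x > 0"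
  have "ln (sqrt x) \<le> sqrt x - 1" using x by (intro ln_le_minus_one) auto
  moreover have "ln (sqrt x) = ln x / 2" using x by (simp add: ln_sqrt)
  ultimately show ?thesis by simp
qed

lemma lnsq_summable: "summable (\<lambda>n. ln (real n) / real n ^ 2)"
proof (rule summable_comparison_test)
  show "summable (\<lambda>n. 2 * real n powr (-3/2))"
    by (intro summable_mult) (simp add: summable_real_powr_iff)
  show "\<exists>N. \<forall>n\<ge>N. norm (ln (real n) / real n ^ 2) \<le> 2 * real n powr (-3/2)"
  proof (intro exI allI impI)
    fix n :: nat assume n: "1 \<le> n"
    then have r: "real n \<ge> 1" by simp
    have "ln (real n) \<ge> 0" using r by simp
    moreover have "ln (real n) \<le> 2 * sqrt (real n)" using r by (intro ln_le_2sqrt) auto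
    moreover have "sqrt (real n) / real n ^ 2 = real n powr (-3/2)"
    proof -
      have "real n powr (1/2 - 2) = real n powr (1/2) / real n powr 2" by (rule powr_diff)
      moreover have "real n powr 2 = real n ^ 2" by simp
      moreover have "real n powr (1/2) = sqrt (real n)" by (simp add: powr_half_sqrt)
      ultimately show ?thesis by simp
    qed
    ultimately have "ln (real n) / real n ^ 2 \<le> 2 * sqrt (real n) / real n ^ 2"
      by (intro divide_right_mono) auto
    also have "\<dots> = 2 * real n powr (-3/2)" using \<open>sqrt (real n) / real n ^ 2 = real n powr (-3/2)\<close> by simp
    finally show "norm (ln (real n) / real n ^ 2) \<le> 2 * real n powr (-3/2)"
      using \<open>ln (real n) \<ge> 0\<close> by simp
  qed
qed

lemma lnsq_bound: "\<exists>A. \<forall>M. (\<Sum>q\<in>{1..M}. ln (real q) / real q ^ 2) \<le> A"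
proof (intro exI allI)
  fix M
  show "(\<Sum>q\<in>{1..M}. ln (real q) / real q ^ 2) \<le> (\<Sum>n. ln (real n) / real n ^ 2)"
  proof -
    have nn: "0 \<le> ln (real m) / real m ^ 2" for m :: nat by (cases m) auto
    show ?thesis using sum_le_suminf[OF lnsq_summable, of "{1..M}"] nn by auto
  qed
qed

lemma nat_le_floor_iff: "(k \<le> nat \<lfloor>Y\<rfloor>) \<longleftrightarrow> real k \<le> Y" if "k > 0" for k :: nat
proof (cases "\<lfloor>Y\<rfloor> \<ge> 0")
  case True
  have "(k \<le> nat \<lfloor>Y\<rfloor>) \<longleftrightarrow> int k \<le> \<lfloor>Y\<rfloor>" using True by (simp add: le_nat_iff)
  also have "\<dots> \<longleftrightarrow> real k \<le> Y" by (simp add: le_floor_iff)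
  finally show ?thesis .
next
  case False
  then have "Y < 0" by linarith
  then show ?thesis using False that by auto
qed

lemma upto_eq: "{k::nat. 0 < k \<and> real k \<le> Y} = {1..nat \<lfloor>Y\<rfloor>}"
  by (auto simp: nat_le_floor_iff)

lemma upto_fin: "finite {k::nat. 0 < k \<and> real k \<le> Y \<and> P k}"
  by (rule finite_subset[of _ "{1..nat \<lfloor>Y\<rfloor>}"]) (auto simp: nat_le_floor_iff)

lemma harm_sum: "(\<Sum>k\<in>{k::nat. 0 < k \<and> real k \<le> Y}. 1 / real k) = harm (nat \<lfloor>Y\<rfloor>)"
  unfolding upto_eq harm_def by (simp add: divide_inverse)

lemma harm_floor:
  assumes Y: "Y \<ge> 1"
  shows "0 \<le> harm (nat \<lfloor>Y\<rfloor>) - ln Y" "harm (nat \<lfloor>Y\<rfloor>) - ln Y \<le> (1::real)"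
proof -
  define n where "n = nat \<lfloor>Y\<rfloor>"
  have n1: "n \<ge> 1" unfolding n_def using Y by linarith
  have nY: "real n \<le> Y" "Y < real n + 1" unfolding n_def using Y by linarith+
  have "ln Y \<le> ln (real n + 1)" using nY Y by simp
  also have "\<dots> \<le> harm n" by (rule ln_le_harm)
  finally show "0 \<le> harm (nat \<lfloor>Y\<rfloor>) - ln Y" unfolding n_def by simp
  have "harm n - ln (real n) \<le> harm 1 - ln (real (1::nat))"
    using n1 by (intro euler_mascheroni_sequence_decreasing) auto
  then have "harm n - ln (real n) \<le> (1::real)" by (simp add: harm_expand)
  moreover have "ln (real n) \<le> ln Y" using nY n1 by simp
  ultimately show "harm (nat \<lfloor>Y\<rfloor>) - ln Y \<le> (1::real)" unfolding n_def by simp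
qed

definition Sq :: "real \<Rightarrow> real" where
  "Sq Y = (\<Sum>m\<in>{m::nat. 0 < m \<and> real m \<le> Y \<and> squarefree m}. 1 / real m)"

lemma sq_identity:
  assumes Y: "Y \<ge> 0"
  shows "harm (nat \<lfloor>Y\<rfloor>) = (\<Sum>q\<in>{q::nat. 0 < q \<and> real q ^ 2 \<le> Y}. (1 / real q ^ 2) * Sq (Y / real q ^ 2))"
proof -
  define Qs where "Qs = {q::nat. 0 < q \<and> real q ^ 2 \<le> Y}"
  define Ms where "Ms = (\<lambda>q::nat. {m::nat. 0 < m \<and> real m \<le> Y / real q ^ 2 \<and> squarefree m})"
  define W where "W = Sigma Qs Ms"
  define h where "h = (\<lambda>(q::nat, m::nat). m * q^2)"
  have qle: "q \<le> q^2" for q :: nat by (simp add: power2_eq_square)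
  have Qfin: "finite Qs"
  proof (rule finite_subset[of _ "{1..nat \<lfloor>Y\<rfloor>}"])
    show "Qs \<subseteq> {1..nat \<lfloor>Y\<rfloor>}"
    proof
      fix q assume "q \<in> Qs"
      then have q: "0 < q" "real q ^ 2 \<le> Y" unfolding Qs_def by auto
      have "real q \<le> real (q ^ 2)" using qle[of q] by (simp only: of_nat_le_iff)
      then have "real q \<le> Y" using q(2) unfolding of_nat_power by linarith
      then show "q \<in> {1..nat \<lfloor>Y\<rfloor>}" using q by (simp add: nat_le_floor_iff)
    qed
  qed simp
  have Mfin: "finite (Ms q)" for q unfolding Ms_def by (rule upto_fin)
  have mle: "real m \<le> Y / real q ^ 2 \<longleftrightarrow> real (m * q^2) \<le> Y" if "q > 0" for m q :: nat
    using that by (simp add: le_divide_eq)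
  have bij: "bij_betw h W {k::nat. 0 < k \<and> real k \<le> Y}"
  proof (rule bij_betw_imageI)
    show "inj_on h W"
    proof (rule inj_onI)
      fix t t' assume tt: "t \<in> W" "t' \<in> W" "h t = h t'"
      obtain q m q' m' where tp: "t = (q, m)" "t' = (q', m')" by (cases t, cases t') auto
      have hh: "0 < q" "0 < q'" "squarefree m" "squarefree m'"
        using tt(1,2) unfolding tp W_def Qs_def Ms_def by auto
      have "m * q^2 = m' * q'^2" using tt(3) unfolding tp h_def by simp
      then show "t = t'" using sqf_unique[OF hh(3,4) hh(1,2)] tp by simp
    qed
  next
    show "h ` W = {k::nat. 0 < k \<and> real k \<le> Y}"
    proof
      show "h ` W \<subseteq> {k::nat. 0 < k \<and> real k \<le> Y}"
      proof
        fix k assume "k \<in> h ` W"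
        then obtain q m where t: "(q, m) \<in> W" "k = h (q, m)" by auto
        then have hh: "0 < q" "0 < m" "real m \<le> Y / real q ^ 2" unfolding W_def Qs_def Ms_def by auto
        then show "k \<in> {k::nat. 0 < k \<and> real k \<le> Y}" using mle[of q m] t(2) unfolding h_def by auto
      qed
    next
      show "{k::nat. 0 < k \<and> real k \<le> Y} \<subseteq> h ` W"
      proof
        fix n assume "n \<in> {k::nat. 0 < k \<and> real k \<le> Y}"
        then have n: "0 < n" "real n \<le> Y" by auto
        obtain m q where mq: "squarefree m" "q > 0" "n = m * q^2" using sqf_exists[OF n(1)] by blast
        have m0: "m > 0" using mq(3) n(1) by (cases "m = 0") auto
        have "q^2 \<le> n" using mq m0 by simp
        then have "real (q ^ 2) \<le> real n" by (simp only: of_nat_le_iff)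
        then have "real q ^ 2 \<le> Y" using n(2) unfolding of_nat_power by linarith
        moreover have "real m \<le> Y / real q ^ 2" using mle[OF mq(2)] n(2) mq(3) by simp
        ultimately have "(q, m) \<in> W" unfolding W_def Qs_def Ms_def using mq m0 by auto
        moreover have "n = h (q, m)" unfolding h_def using mq by simp
        ultimately show "n \<in> h ` W" by blast
      qed
    qed
  qed
  have "harm (nat \<lfloor>Y\<rfloor>) = (\<Sum>k\<in>{k::nat. 0 < k \<and> real k \<le> Y}. 1 / real k)"
    by (simp add: harm_sum)
  also have "\<dots> = (\<Sum>t\<in>W. 1 / real (h t))"
    using sum.reindex_bij_betw[OF bij, of "\<lambda>k. 1 / real k"] by simp
  also have "\<dots> = (\<Sum>t\<in>W. case_prod (\<lambda>q m. (1 / real q ^ 2) * (1 / real m)) t)"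
    by (intro sum.cong refl) (auto simp: h_def)
  also have "\<dots> = (\<Sum>q\<in>Qs. \<Sum>m\<in>Ms q. (1 / real q ^ 2) * (1 / real m))"
    unfolding W_def using Qfin Mfin by (subst sum.Sigma) auto
  also have "\<dots> = (\<Sum>q\<in>Qs. (1 / real q ^ 2) * Sq (Y / real q ^ 2))"
    unfolding Sq_def Ms_def by (simp add: sum_distrib_left)
  finally show ?thesis unfolding Qs_def .
qed

definition Tz :: "real \<Rightarrow> real" where
  "Tz Y = Sq Y - ln Y / zeta_real 2"

lemma sqrt_set_eq:
  assumes "Y \<ge> 0"
  shows "{q::nat. 0 < q \<and> real q ^ 2 \<le> Y} = {1..nat \<lfloor>sqrt Y\<rfloor>}"
proof -
  have "real q ^ 2 \<le> Y \<longleftrightarrow> real q \<le> sqrt Y" for q :: nat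
  proof
    assume "real q ^ 2 \<le> Y" then show "real q \<le> sqrt Y" by (rule real_le_rsqrt)
  next
    assume "real q \<le> sqrt Y"
    then have "real q ^ 2 \<le> sqrt Y ^ 2" by (intro power_mono) auto
    then show "real q ^ 2 \<le> Y" using assms by (simp only: real_sqrt_pow2)
  qed
  then have "{q::nat. 0 < q \<and> real q ^ 2 \<le> Y} = {q::nat. 0 < q \<and> real q \<le> sqrt Y}" by blast
  then show ?thesis using upto_eq[of "sqrt Y"] by (simp only:)
qed

lemma Tz_step:
  assumes Y: "Y \<ge> 1"
  defines "M \<equiv> nat \<lfloor>sqrt Y\<rfloor>"
  shows "Tz Y = (harm (nat \<lfloor>Y\<rfloor>) - ln Y)
            + (ln Y / zeta_real 2) * (zeta_real 2 - (\<Sum>q\<in>{1..M}. 1 / real q ^ 2))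
            + (2 / zeta_real 2) * (\<Sum>q\<in>{1..M}. ln (real q) / real q ^ 2)
            - (\<Sum>q\<in>{2..M}. Tz (Y / real q ^ 2) / real q ^ 2)"
proof -
  define z where "z = zeta_real 2"
  have z1: "z \<ge> 1" unfolding z_def using zeta2_bounds by simp
  have Y0: "Y \<ge> 0" using Y by simp
  have "sqrt Y \<ge> 1" using Y by simp
  then have M1: "M \<ge> 1" unfolding M_def using nat_le_floor_iff[of 1 "sqrt Y"] by simp
  have sqrtq: "real q ^ 2 \<le> Y" if "q \<in> {1..M}" for q
  proof -
    have "q \<in> {1..nat \<lfloor>sqrt Y\<rfloor>}" using that unfolding M_def .
    then have "q \<in> {q::nat. 0 < q \<and> real q ^ 2 \<le> Y}" unfolding sqrt_set_eq[OF Y0] .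
    then show ?thesis by blast
  qed
  have "harm (nat \<lfloor>Y\<rfloor>) = (\<Sum>q\<in>{1..M}. (1 / real q ^ 2) * Sq (Y / real q ^ 2))"
    unfolding M_def using sq_identity[OF Y0] unfolding sqrt_set_eq[OF Y0] .
  also have "\<dots> = (\<Sum>q\<in>{1..M}. (ln Y / z) * (1 / real q ^ 2) - (2 / z) * (ln (real q) / real q ^ 2)
                      + Tz (Y / real q ^ 2) / real q ^ 2)"
  proof (intro sum.cong refl)
    fix q assume q: "q \<in> {1..M}"
    have qpos: "real q > 0" using q by simp
    have lnq: "ln (Y / real q ^ 2) = ln Y - 2 * ln (real q)"
      using qpos Y by (subst ln_div) (auto simp: ln_realpow)
    define w where "w = real q ^ 2"
    define A where "A = Sq (Y / w)"
    have w0: "w > 0" unfolding w_def using qpos by simp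
    have z0: "z > 0" using z1 by simp
    have "(1 / w) * A = (ln Y / z) * (1 / w) - (2 / z) * (ln (real q) / w) + (A - (ln Y - 2 * ln (real q)) / z) / w"
      using w0 z0 by (simp add: field_simps)
    then show "(1 / real q ^ 2) * Sq (Y / real q ^ 2) = (ln Y / z) * (1 / real q ^ 2) - (2 / z) * (ln (real q) / real q ^ 2)
                      + Tz (Y / real q ^ 2) / real q ^ 2"
      unfolding Tz_def z_def[symmetric] lnq[symmetric] w_def[symmetric] A_def[symmetric] .
  qed
  also have "\<dots> = (ln Y / z) * (\<Sum>q\<in>{1..M}. 1 / real q ^ 2) - (2 / z) * (\<Sum>q\<in>{1..M}. ln (real q) / real q ^ 2)
                 + (\<Sum>q\<in>{1..M}. Tz (Y / real q ^ 2) / real q ^ 2)"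
    by (simp only: sum.distrib sum_subtractf sum_distrib_left)
  also have "(\<Sum>q\<in>{1..M}. Tz (Y / real q ^ 2) / real q ^ 2) = Tz Y + (\<Sum>q\<in>{2..M}. Tz (Y / real q ^ 2) / real q ^ 2)"
  proof -
    show ?thesis using sum.atLeast_Suc_atMost[OF M1, of "\<lambda>q. Tz (Y / real q ^ 2) / real q ^ 2"]
      by (simp add: numeral_2_eq_2)
  qed
  finally have hh: "harm (nat \<lfloor>Y\<rfloor>) = (ln Y / z) * (\<Sum>q\<in>{1..M}. 1 / real q ^ 2)
     - (2 / z) * (\<Sum>q\<in>{1..M}. ln (real q) / real q ^ 2)
     + (Tz Y + (\<Sum>q\<in>{2..M}. Tz (Y / real q ^ 2) / real q ^ 2))" .
  have e: "(ln Y / z) * (z - (\<Sum>q\<in>{1..M}. 1 / real q ^ 2)) = ln Y - (ln Y / z) * (\<Sum>q\<in>{1..M}. 1 / real q ^ 2)"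
    using z1 by (simp add: right_diff_distrib)
  show ?thesis unfolding z_def[symmetric] using e hh by linarith
qed

lemma floor_div_less:
  assumes Y: "Y \<ge> 1" and q: "q \<ge> 2" "real q ^ 2 \<le> Y"
  shows "nat \<lfloor>Y / real q ^ 2\<rfloor> < nat \<lfloor>Y\<rfloor>" "Y / real q ^ 2 \<ge> 1"
proof -
  have q4: "real q ^ 2 \<ge> 4"
  proof -
    have "real q \<ge> 2" using q by simp
    then have "real q ^ 2 \<ge> 2 ^ 2" by (intro power_mono) auto
    then show ?thesis by simp
  qed
  have Y4: "Y \<ge> 4" using q4 q(2) by linarith
  have qp: "real q ^ 2 > 0" using q4 by linarith
  show ge1: "Y / real q ^ 2 \<ge> 1" using q(2) qp by (simp add: le_divide_eq)
  have "Y / real q ^ 2 \<le> Y / 4" using q4 Y by (intro divide_left_mono) linarith+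
  moreover have "of_int \<lfloor>Y / real q ^ 2\<rfloor> \<le> Y / real q ^ 2" by (rule of_int_floor_le)
  moreover have "Y - 1 < of_int \<lfloor>Y\<rfloor>" by (rule real_of_int_floor_gt_diff_one)
  ultimately have "real_of_int \<lfloor>Y / real q ^ 2\<rfloor> < real_of_int \<lfloor>Y\<rfloor>" using Y4 by linarith
  then have lt: "\<lfloor>Y / real q ^ 2\<rfloor> < \<lfloor>Y\<rfloor>" by (simp only: of_int_less_iff)
  have "\<lfloor>Y / real q ^ 2\<rfloor> \<ge> 0" using ge1 by simp
  then show "nat \<lfloor>Y / real q ^ 2\<rfloor> < nat \<lfloor>Y\<rfloor>" using lt by linarith
qed

lemma Tz_bounded: "\<exists>C\<ge>0. \<forall>Y\<ge>1. \<bar>Tz Y\<bar> \<le> C"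
proof -
  define z where "z = zeta_real 2"
  have z1: "1 \<le> z" and z2: "z < 2" unfolding z_def using zeta2_bounds by auto
  obtain A where A: "\<And>M. (\<Sum>q\<in>{1..M}. ln (real q) / real q ^ 2) \<le> A" using lnsq_bound by blast
  have A0: "A \<ge> 0" using A[of 0] by simp
  define C where "C = (5 + 2 * A) / (2 - z)"
  have C0: "C \<ge> 0" unfolding C_def using A0 z2 by simp
  have Ceq: "5 + 2 * A + C * (z - 1) = C" unfolding C_def using z2 by (simp add: field_simps)
  have main: "\<forall>Y. 1 \<le> Y \<longrightarrow> nat \<lfloor>Y\<rfloor> = n \<longrightarrow> \<bar>Tz Y\<bar> \<le> C" for n
  proof (induction n rule: less_induct)
    case (less n)
    show ?case
    proof (intro allI impI)
      fix Y :: real assume Y: "1 \<le> Y" and n: "nat \<lfloor>Y\<rfloor> = n"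
      have Y0: "Y \<ge> 0" using Y by simp
      define M where "M = nat \<lfloor>sqrt Y\<rfloor>"
      have "sqrt Y \<ge> 1" using Y by simp
      then have M1: "M \<ge> 1" unfolding M_def using nat_le_floor_iff[of 1 "sqrt Y"] by simp
      have Msq: "sqrt Y < real M + 1" unfolding M_def using \<open>sqrt Y \<ge> 1\<close> by linarith
      have sqrtq: "real q ^ 2 \<le> Y" if "q \<in> {1..M}" for q
      proof -
        have "q \<in> {1..nat \<lfloor>sqrt Y\<rfloor>}" using that unfolding M_def .
        then have "q \<in> {q::nat. 0 < q \<and> real q ^ 2 \<le> Y}" unfolding sqrt_set_eq[OF Y0] .
        then show ?thesis by blast
      qed
      define P2 where "P2 = (\<Sum>q\<in>{1..M}. 1 / real q ^ 2)"
      define LQ where "LQ = (\<Sum>q\<in>{1..M}. ln (real q) / real q ^ 2)"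
      define S2 where "S2 = (\<Sum>q\<in>{2..M}. Tz (Y / real q ^ 2) / real q ^ 2)"
      have step: "Tz Y = (harm (nat \<lfloor>Y\<rfloor>) - ln Y) + (ln Y / z) * (z - P2) + (2 / z) * LQ - S2"
        using Tz_step[OF Y] unfolding M_def P2_def LQ_def S2_def z_def .
      have t1: "0 \<le> harm (nat \<lfloor>Y\<rfloor>) - ln Y" "harm (nat \<lfloor>Y\<rfloor>) - ln Y \<le> 1"
        using harm_floor[OF Y] by auto
      have lnY: "0 \<le> ln Y" using Y by simp
      have zP: "0 \<le> z - P2" "z - P2 \<le> 1 / real M"
        using partial_sq_bounds[of M] M1 unfolding P2_def z_def by auto
      have "ln Y \<le> 2 * sqrt Y" using Y by (intro ln_le_2sqrt) auto
      also have "\<dots> \<le> 4 * real M" using Msq M1 by simp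
      finally have lnM: "ln Y \<le> 4 * real M" .
      have "ln Y * 1 \<le> ln Y * z" using lnY z1 by (intro mult_left_mono)
      then have "ln Y / z \<le> ln Y" using z1 by (simp add: divide_le_eq)
      then have "(ln Y / z) * (z - P2) \<le> ln Y * (z - P2)"
        using zP by (intro mult_right_mono) auto
      also have "\<dots> \<le> ln Y * (1 / real M)" using lnY zP by (intro mult_left_mono) auto
      also have "\<dots> \<le> 4" using lnM M1 by (simp add: divide_le_eq)
      finally have t2: "(ln Y / z) * (z - P2) \<le> 4" .
      have t2': "0 \<le> (ln Y / z) * (z - P2)" using lnY zP z1 by simp
      have LQ0: "0 \<le> LQ" unfolding LQ_def by (intro sum_nonneg) auto
      have "(2 / z) * LQ \<le> 2 * LQ" using LQ0 z1 by (intro mult_right_mono) (auto simp: divide_le_eq)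
      also have "\<dots> \<le> 2 * A" using A[of M] unfolding LQ_def by simp
      finally have t3: "(2 / z) * LQ \<le> 2 * A" .
      have t3': "0 \<le> (2 / z) * LQ" using LQ0 z1 by simp
      have "\<bar>S2\<bar> \<le> (\<Sum>q\<in>{2..M}. \<bar>Tz (Y / real q ^ 2) / real q ^ 2\<bar>)"
        unfolding S2_def by (rule sum_abs)
      also have "\<dots> \<le> (\<Sum>q\<in>{2..M}. C * (1 / real q ^ 2))"
      proof (intro sum_mono)
        fix q assume q: "q \<in> {2..M}"
        then have qq: "q \<ge> 2" "real q ^ 2 \<le> Y" using sqrtq[of q] by auto
        have fl: "nat \<lfloor>Y / real q ^ 2\<rfloor> < n" "Y / real q ^ 2 \<ge> 1"
          using floor_div_less[OF Y qq] n by auto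
        have "\<bar>Tz (Y / real q ^ 2)\<bar> \<le> C" using less.IH[OF fl(1)] fl(2) by blast
        moreover have "real q ^ 2 > 0" using qq by simp
        ultimately show "\<bar>Tz (Y / real q ^ 2) / real q ^ 2\<bar> \<le> C * (1 / real q ^ 2)"
          by (simp add: abs_div divide_right_mono)
      qed
      also have "\<dots> = C * (\<Sum>q\<in>{2..M}. 1 / real q ^ 2)" by (simp add: sum_distrib_left)
      also have "\<dots> \<le> C * (z - 1)"
      proof -
        have "P2 = 1 + (\<Sum>q\<in>{2..M}. 1 / real q ^ 2)"
          unfolding P2_def using sum.atLeast_Suc_atMost[OF M1, of "\<lambda>q. 1 / real q ^ 2"]
          by (simp add: numeral_2_eq_2)
        moreover have "P2 \<le> z" using zP by simp
        ultimately show ?thesis using C0 by (intro mult_left_mono) auto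
      qed
      finally have t4: "\<bar>S2\<bar> \<le> C * (z - 1)" .
      have "\<bar>Tz Y\<bar> \<le> 5 + 2 * A + C * (z - 1)" unfolding step using t1 t2 t2' t3 t3' t4 by linarith
      then show "\<bar>Tz Y\<bar> \<le> C" using Ceq by simp
    qed
  qed
  show ?thesis using main C0 by blast
qed



lemma lnk_sum_aux:
  assumes "n \<ge> 1"
  shows "- (\<Sum>k\<in>{1..<n}. 1 / real k ^ 2) \<le> ln (real n) ^ 2 - 2 * (\<Sum>k\<in>{1..n}. ln (real k) / real k)
       \<and> ln (real n) ^ 2 - 2 * (\<Sum>k\<in>{1..n}. ln (real k) / real k) \<le> 2 * ln (real n) * (1 - 1 / real n)"
  using assms
proof (induction n rule: dec_induct)
  case base then show ?case by simp
next
  case (step n)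
  define x where "x = real n"
  have x1: "x \<ge> 1" unfolding x_def using step by simp
  define a where "a = ln x"
  define b where "b = ln (x + 1)"
  define d where "d = b - a"
  define D where "D = a ^ 2 - 2 * (\<Sum>k\<in>{1..n}. ln (real k) / real k)"
  define P where "P = (\<Sum>k\<in>{1..<n}. 1 / real k ^ 2)"
  have IH: "- P \<le> D" "D \<le> 2 * a * (1 - 1 / x)" using step.IH unfolding D_def P_def a_def x_def by auto
  have a0: "a \<ge> 0" unfolding a_def using x1 by simp
  have ab: "a \<le> b" unfolding a_def b_def using x1 by simp
  have dle: "d \<le> 1 / x" unfolding d_def a_def b_def using ln_diff_le_inverse[OF x1] by simp
  have dge: "1 / (x + 1) \<le> d"
  proof -
    have "ln (x / (x + 1)) \<le> x / (x + 1) - 1" using x1 by (intro ln_le_minus_one) auto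
    moreover have "ln (x / (x + 1)) = a - b" unfolding a_def b_def using x1 by (simp add: ln_div)
    moreover have "x / (x + 1) - 1 = - (1 / (x + 1))" using x1 by (simp add: field_simps)
    ultimately show ?thesis unfolding d_def by linarith
  qed
  have "0 \<le> 1 / (x + 1)" using x1 by simp
  then have d0: "0 \<le> d" using dge by linarith
  have D1: "ln (real (Suc n)) ^ 2 - 2 * (\<Sum>k\<in>{1..Suc n}. ln (real k) / real k)
           = D + (b ^ 2 - a ^ 2 - 2 * b / (x + 1))"
    unfolding D_def a_def b_def x_def by (simp add: add.commute)
  have iden: "b ^ 2 - a ^ 2 - 2 * b / (x + 1) = 2 * (b * (d - 1 / (x + 1))) - d ^ 2"
    unfolding d_def by (simp add: algebra_simps power2_eq_square diff_divide_distrib)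
  have f1: "0 \<le> b * (d - 1 / (x + 1))" using ab a0 dge by simp
  have f2: "d ^ 2 \<le> (1 / x) ^ 2" using d0 dle by (intro power_mono) auto
  have f2': "(1 / x) ^ 2 = 1 / x ^ 2" by (simp add: power_divide)
  have f3: "b * (d - 1 / (x + 1)) \<le> b * (1 / x - 1 / (x + 1))" using ab a0 dle by (intro mult_left_mono) auto
  have f4: "a * (1 - 1 / x) \<le> b * (1 - 1 / x)" using ab x1 by (intro mult_right_mono) auto
  have f5: "b * (1 - 1 / (x + 1)) = b * (1 - 1 / x) + b * (1 / x - 1 / (x + 1))" by (simp add: algebra_simps)
  have P1: "(\<Sum>k\<in>{1..<Suc n}. 1 / real k ^ 2) = P + 1 / x ^ 2"
    unfolding P_def x_def using step by simp
  have "- (P + 1 / x ^ 2) \<le> D + (b ^ 2 - a ^ 2 - 2 * b / (x + 1))"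
    using IH(1) iden f1 f2 f2' by linarith
  moreover have "D + (b ^ 2 - a ^ 2 - 2 * b / (x + 1)) \<le> 2 * b * (1 - 1 / (x + 1))"
  proof -
    have i2: "D \<le> 2 * (a * (1 - 1 / x))" using IH(2) by (simp add: mult.assoc)
    have "0 \<le> d ^ 2" by simp
    then have "D + (b ^ 2 - a ^ 2 - 2 * b / (x + 1)) \<le> 2 * (b * (1 - 1 / (x + 1)))"
      using i2 iden f3 f4 f5 by linarith
    then show ?thesis by (simp add: mult.assoc)
  qed
  ultimately show ?case unfolding D1 P1 using x_def b_def by (simp add: add.commute)
qed

lemma lnk_sum:
  assumes "n \<ge> 1"
  shows "\<bar>(\<Sum>k\<in>{1..n}. ln (real k) / real k) - ln (real n) ^ 2 / 2\<bar> \<le> ln (real n) + 1"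
proof -
  have h: "- (\<Sum>k\<in>{1..<n}. 1 / real k ^ 2) \<le> ln (real n) ^ 2 - 2 * (\<Sum>k\<in>{1..n}. ln (real k) / real k)"
     "ln (real n) ^ 2 - 2 * (\<Sum>k\<in>{1..n}. ln (real k) / real k) \<le> 2 * ln (real n) * (1 - 1 / real n)"
    using lnk_sum_aux[OF assms] by auto
  have "(\<Sum>k\<in>{1..<n}. 1 / real k ^ 2) \<le> (\<Sum>k\<in>{1..<n}. 1 / (real k * (real k + 1)) * 2)"
  proof (intro sum_mono)
    fix k assume "k \<in> {1..<n}"
    then have k: "real k \<ge> 1" by simp
    have "real k * (real k + 1) \<le> 2 * real k ^ 2" using k by (simp add: power2_eq_square algebra_simps)
    then have "2 / (2 * real k ^ 2) \<le> 2 / (real k * (real k + 1))" using k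
      by (intro divide_left_mono) auto
    then show "1 / real k ^ 2 \<le> 1 / (real k * (real k + 1)) * 2" by simp
  qed
  also have "\<dots> \<le> 2"
  proof -
    have "(\<Sum>k\<in>{1..<n}. 1 / (real k * (real k + 1))) = 1 - 1 / real n"
      using assms
    proof (induction n rule: dec_induct)
      case base then show ?case by simp
    next
      case (step m)
      have m0: "real m > 0" using step(1) by simp
      have e: "1 - 1 / real m + 1 / (real m * (real m + 1)) = 1 - 1 / (real m + 1)"
      proof -
        have "real m + real m * real m > 0" using m0 by (simp add: add_pos_pos)
        then show ?thesis using m0 by (simp add: field_simps)
      qed
      show ?case using step(1) step(3) e by (simp add: sum.atLeastLessThan_Suc)
    qed
    moreover have "(\<Sum>k\<in>{1..<n}. 1 / (real k * (real k + 1)) * 2) = (\<Sum>k\<in>{1..<n}. 1 / (real k * (real k + 1))) * 2"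
      by (rule sum_distrib_right[symmetric])
    moreover have "0 \<le> 1 / real n" by simp
    ultimately show ?thesis by linarith
  qed
  finally have P2: "(\<Sum>k\<in>{1..<n}. 1 / real k ^ 2) \<le> 2" .
  have ln0: "ln (real n) \<ge> 0" using assms by simp
  have "2 * ln (real n) * (1 - 1 / real n) \<le> 2 * ln (real n)" using ln0 assms by (simp add: mult_left_le)
  then show ?thesis using h P2 ln0 by linarith
qed




definition KK :: "real \<Rightarrow> nat set" where
  "KK B = {k::nat. 0 < k \<and> real k ^ 3 \<le> B}"

definition MM :: "real \<Rightarrow> nat \<Rightarrow> nat set" where
  "MM B k = {m::nat. 0 < m \<and> real m \<le> sqrt (B / real k ^ 3) \<and> squarefree m}"

lemma mk_iff:
  assumes "k > 0" "B \<ge> 0"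
  shows "real m ^ 2 * real k ^ 3 \<le> B \<longleftrightarrow> real m \<le> sqrt (B / real k ^ 3)"
proof -
  have kp: "real k ^ 3 > 0" using assms by simp
  have "real m ^ 2 * real k ^ 3 \<le> B \<longleftrightarrow> real m ^ 2 \<le> B / real k ^ 3" using kp by (simp add: le_divide_eq)
  also have "\<dots> \<longleftrightarrow> real m \<le> sqrt (B / real k ^ 3)"
  proof
    assume "real m ^ 2 \<le> B / real k ^ 3" then show "real m \<le> sqrt (B / real k ^ 3)" by (rule real_le_rsqrt)
  next
    assume "real m \<le> sqrt (B / real k ^ 3)"
    then have "real m ^ 2 \<le> sqrt (B / real k ^ 3) ^ 2" by (intro power_mono) auto
    then show "real m ^ 2 \<le> B / real k ^ 3" using assms kp by (simp only: real_sqrt_pow2 divide_nonneg_pos)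
  qed
  finally show ?thesis .
qed

lemma PP_split:
  assumes B: "B \<ge> 1"
  shows "PP (nat \<lfloor>B\<rfloor>) = Sigma (KK B) (MM B)"
proof -
  have B0: "B \<ge> 0" using B by simp
  have "(k, m) \<in> PP (nat \<lfloor>B\<rfloor>) \<longleftrightarrow> (k, m) \<in> Sigma (KK B) (MM B)" for k m
  proof (cases "0 < k \<and> 0 < m")
    case True
    then have km: "0 < k" "0 < m" by auto
    have "m^2 * k^3 \<le> nat \<lfloor>B\<rfloor> \<longleftrightarrow> real (m^2 * k^3) \<le> B"
      using km by (intro nat_le_floor_iff) simp
    also have "\<dots> \<longleftrightarrow> real m ^ 2 * real k ^ 3 \<le> B" by simp
    also have "\<dots> \<longleftrightarrow> real m \<le> sqrt (B / real k ^ 3)" using mk_iff[OF km(1) B0] .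
    finally have e: "m^2 * k^3 \<le> nat \<lfloor>B\<rfloor> \<longleftrightarrow> real m \<le> sqrt (B / real k ^ 3)" .
    have "real m \<le> sqrt (B / real k ^ 3) \<Longrightarrow> real k ^ 3 \<le> B"
    proof -
      assume "real m \<le> sqrt (B / real k ^ 3)"
      then have "real m ^ 2 * real k ^ 3 \<le> B" using mk_iff[OF km(1) B0] by simp
      moreover have "real k ^ 3 \<le> real m ^ 2 * real k ^ 3" using km by simp
      ultimately show ?thesis by linarith
    qed
    then show ?thesis using e km unfolding PP_def KK_def MM_def by auto
  next
    case False
    then show ?thesis unfolding PP_def KK_def MM_def by auto
  qed
  then show ?thesis by auto
qed

lemma k_le_cube: "k > 0 \<Longrightarrow> real k \<le> real k ^ 3" for k :: nat
  using power_increasing[of 1 3 "real k"] by simp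

lemma KK_sub: "KK B \<subseteq> {k::nat. 0 < k \<and> real k \<le> B}"
proof
  fix k assume "k \<in> KK B"
  then have k: "0 < k" "real k ^ 3 \<le> B" unfolding KK_def by auto
  then have "real k \<le> B" using k_le_cube[OF k(1)] by linarith
  then show "k \<in> {k::nat. 0 < k \<and> real k \<le> B}" using k by simp
qed

lemma KK_fin: "finite (KK B)"
  by (rule finite_subset[OF KK_sub]) (rule upto_fin[where P = "\<lambda>_. True", simplified])

lemma MM_fin: "finite (MM B k)"
  unfolding MM_def by (rule upto_fin)

lemma term_bound:
  fixes m k :: nat and B :: real
  assumes km: "m > 0" "k > 0" and B: "B \<ge> 1"
  shows "\<bar>real (m * k^2 * (nat \<lfloor>B\<rfloor> div (m^2 * k^3))) - B / (real m * real k)\<bar> \<le> 2 * (real m * real k ^ 2)"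
proof -
  define N where "N = nat \<lfloor>B\<rfloor>"
  define q where "q = m^2 * k^3"
  have q0: "q > 0" unfolding q_def using km by simp
  have NB: "real N \<le> B" "B < real N + 1" unfolding N_def using B by linarith+
  define D where "D = real (N div q)"
  define R where "R = real (N mod q)"
  define Q where "Q = real q"
  have Q0: "Q > 0" unfolding Q_def using q0 by simp
  have e1: "real (N div q * q + N mod q) = real N" by simp
  have NDR: "real N = D * Q + R" unfolding D_def R_def Q_def e1[symmetric] of_nat_add of_nat_mult ..
  have R: "0 \<le> R" "R < Q" unfolding R_def Q_def using q0 by auto
  have "D - B / Q = (real N - R - B) / Q" using Q0 NDR by (simp add: field_simps)
  moreover have "real N - R - B \<le> 0" using NB R by linarith
  moreover have Q1: "Q \<ge> 1" unfolding Q_def using q0 by simp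
  then have "real N - R - B \<ge> - 2 * Q" using NB R by linarith
  ultimately have "D - B / Q \<le> 0" "-2 \<le> D - B / Q" using Q0 by (simp_all add: divide_nonpos_pos le_divide_eq)
  then have Dabs: "\<bar>D - B / Q\<bar> \<le> 2" by linarith
  define w where "w = real m * real k ^ 2"
  have w0: "w > 0" unfolding w_def using km by simp
  have wQ: "w * (B / Q) = B / (real m * real k)" unfolding w_def Q_def q_def using km
    by (simp add: field_simps power2_eq_square power3_eq_cube)
  have "real (m * k^2 * (N div q)) - B / (real m * real k) = w * (D - B / Q)"
    unfolding w_def D_def wQ[symmetric] by (simp add: algebra_simps)
  then have "\<bar>real (m * k^2 * (N div q)) - B / (real m * real k)\<bar> = w * \<bar>D - B / Q\<bar>"
    using w0 by (simp add: abs_mult)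
  also have "\<dots> \<le> w * 2" using Dabs w0 by (intro mult_left_mono) auto
  finally show ?thesis unfolding N_def q_def w_def by simp
qed

lemma sum_PP:
  assumes B: "B \<ge> 1"
  shows "(\<Sum>p\<in>PP (nat \<lfloor>B\<rfloor>). f p) = (\<Sum>k\<in>KK B. \<Sum>m\<in>MM B k. f (k, m))"
proof -
  have "(\<Sum>k\<in>KK B. \<Sum>m\<in>MM B k. f (k, m)) = (\<Sum>(k, m)\<in>Sigma (KK B) (MM B). f (k, m))"
    by (rule sum.Sigma) (auto simp: KK_fin MM_fin)
  also have "\<dots> = (\<Sum>p\<in>PP (nat \<lfloor>B\<rfloor>). f p)" unfolding PP_split[OF B] by (simp add: case_prod_beta)
  finally show ?thesis by simp
qed

lemma harmKK:
  assumes B: "B \<ge> 1"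
  shows "(\<Sum>k\<in>KK B. 1 / real k) \<le> 1 + ln B"
proof -
  have "(\<Sum>k\<in>KK B. 1 / real k) \<le> (\<Sum>k\<in>{k::nat. 0 < k \<and> real k \<le> B}. 1 / real k)"
    by (rule sum_mono2) (use KK_sub upto_fin[where P = "\<lambda>_. True"] in auto)
  also have "\<dots> = harm (nat \<lfloor>B\<rfloor>)" by (rule harm_sum)
  also have "\<dots> \<le> 1 + ln B" using harm_floor[OF B] by simp
  finally show ?thesis .
qed

lemma w_bound:
  assumes B: "B \<ge> 1"
  shows "(\<Sum>p\<in>PP (nat \<lfloor>B\<rfloor>). real (snd p) * real (fst p) ^ 2) \<le> B * (1 + ln B)"
proof -
  have inner: "(\<Sum>m\<in>MM B k. real m * real k ^ 2) \<le> B * (1 / real k)" if k: "k \<in> KK B" for k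
  proof -
    have k0: "k > 0" "real k ^ 3 \<le> B" using k unfolding KK_def by auto
    define Y where "Y = sqrt (B / real k ^ 3)"
    have Y0: "Y \<ge> 0" unfolding Y_def using B by simp
    have YY: "Y * Y = B / real k ^ 3" unfolding Y_def using B by simp
    have sub: "MM B k \<subseteq> {1..nat \<lfloor>Y\<rfloor>}" 
    proof
      fix m assume "m \<in> MM B k"
      then have m: "0 < m" "real m \<le> Y" unfolding MM_def Y_def by auto
      then have "m \<le> nat \<lfloor>Y\<rfloor>" using nat_le_floor_iff[of m Y] by blast
      then show "m \<in> {1..nat \<lfloor>Y\<rfloor>}" using m by simp
    qed
    have "real (card (MM B k)) \<le> real (nat \<lfloor>Y\<rfloor>)"
      using card_mono[OF _ sub] by simp
    also have "\<dots> \<le> Y" using Y0 by linarith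
    finally have cardY: "real (card (MM B k)) \<le> Y" .
    have "(\<Sum>m\<in>MM B k. real m) \<le> real (card (MM B k)) * Y"
      by (rule sum_bounded_above) (auto simp: MM_def Y_def)
    also have "\<dots> \<le> Y * Y" using cardY Y0 by (intro mult_right_mono) auto
    finally have sm: "(\<Sum>m\<in>MM B k. real m) \<le> B / real k ^ 3" using YY by simp
    have "(\<Sum>m\<in>MM B k. real m * real k ^ 2) = (\<Sum>m\<in>MM B k. real m) * real k ^ 2"
      by (simp add: sum_distrib_right)
    also have "\<dots> \<le> (B / real k ^ 3) * real k ^ 2" using sm by (intro mult_right_mono) auto
    also have "\<dots> = B * (1 / real k)" using k0 by (simp add: field_simps power2_eq_square power3_eq_cube)
    finally show ?thesis .
  qed
  have "(\<Sum>p\<in>PP (nat \<lfloor>B\<rfloor>). real (snd p) * real (fst p) ^ 2) = (\<Sum>k\<in>KK B. \<Sum>m\<in>MM B k. real m * real k ^ 2)"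
    using sum_PP[OF B, of "\<lambda>p. real (snd p) * real (fst p) ^ 2"] by simp
  also have "\<dots> \<le> (\<Sum>k\<in>KK B. B * (1 / real k))" by (intro sum_mono inner)
  also have "\<dots> = B * (\<Sum>k\<in>KK B. 1 / real k)" by (simp add: sum_distrib_left)
  also have "\<dots> \<le> B * (1 + ln B)" using harmKK[OF B] B by (intro mult_left_mono) auto
  finally show ?thesis .
qed

lemma F_vs_G:
  assumes B: "B \<ge> 1"
  shows "\<bar>real (\<Sum>p\<in>PP (nat \<lfloor>B\<rfloor>). snd p * fst p^2 * (nat \<lfloor>B\<rfloor> div (snd p^2 * fst p^3)))
          - B * (\<Sum>p\<in>PP (nat \<lfloor>B\<rfloor>). 1 / (real (snd p) * real (fst p)))\<bar> \<le> 2 * (B * (1 + ln B))"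
proof -
  define N where "N = nat \<lfloor>B\<rfloor>"
  define a where "a = (\<lambda>p::nat \<times> nat. real (snd p * fst p^2 * (N div (snd p^2 * fst p^3))))"
  define b where "b = (\<lambda>p::nat \<times> nat. B / (real (snd p) * real (fst p)))"
  have e: "real (\<Sum>p\<in>PP N. snd p * fst p^2 * (N div (snd p^2 * fst p^3)))
          - B * (\<Sum>p\<in>PP N. 1 / (real (snd p) * real (fst p)))
        = (\<Sum>p\<in>PP N. a p - b p)"
    unfolding a_def b_def sum_subtractf of_nat_sum sum_distrib_left by simp
  have "\<bar>\<Sum>p\<in>PP N. a p - b p\<bar> \<le> (\<Sum>p\<in>PP N. \<bar>a p - b p\<bar>)"
    by (rule sum_abs)
  also have "\<dots> \<le> (\<Sum>p\<in>PP N. 2 * (real (snd p) * real (fst p) ^ 2))"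
  proof (intro sum_mono)
    fix p assume "p \<in> PP N"
    then have "snd p > 0" "fst p > 0" unfolding PP_def by auto
    then show "\<bar>a p - b p\<bar> \<le> 2 * (real (snd p) * real (fst p) ^ 2)"
      unfolding a_def b_def N_def by (rule term_bound[OF _ _ B])
  qed
  also have "\<dots> = 2 * (\<Sum>p\<in>PP N. real (snd p) * real (fst p) ^ 2)" by (rule sum_distrib_left[symmetric])
  also have "\<dots> \<le> 2 * (B * (1 + ln B))" using w_bound[OF B] unfolding N_def by simp
  finally show ?thesis unfolding e[unfolded N_def] N_def .
qed

lemma G_eq:
  assumes B: "B \<ge> 1"
  shows "(\<Sum>p\<in>PP (nat \<lfloor>B\<rfloor>). 1 / (real (snd p) * real (fst p)))
       = (\<Sum>k\<in>KK B. (1 / real k) * Sq (sqrt (B / real k ^ 3)))"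
proof -
  have "(\<Sum>p\<in>PP (nat \<lfloor>B\<rfloor>). 1 / (real (snd p) * real (fst p)))
      = (\<Sum>k\<in>KK B. \<Sum>m\<in>MM B k. 1 / (real m * real k))"
    using sum_PP[OF B, of "\<lambda>p. 1 / (real (snd p) * real (fst p))"] by simp
  also have "\<dots> = (\<Sum>k\<in>KK B. (1 / real k) * Sq (sqrt (B / real k ^ 3)))"
  proof (intro sum.cong refl)
    fix k assume "k \<in> KK B"
    have "(\<Sum>m\<in>MM B k. 1 / (real m * real k)) = (\<Sum>m\<in>MM B k. (1 / real k) * (1 / real m))"
      by (intro sum.cong refl) simp
    also have "\<dots> = (1 / real k) * (\<Sum>m\<in>MM B k. 1 / real m)" by (rule sum_distrib_left[symmetric])
    also have "(\<Sum>m\<in>MM B k. 1 / real m) = Sq (sqrt (B / real k ^ 3))" unfolding Sq_def MM_def ..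
    finally show "(\<Sum>m\<in>MM B k. 1 / (real m * real k)) = (1 / real k) * Sq (sqrt (B / real k ^ 3))" .
  qed
  finally show ?thesis .
qed

lemma KK_eq:
  assumes B: "B \<ge> 1"
  shows "KK B = {1..nat \<lfloor>root 3 B\<rfloor>}"
proof -
  have "real k ^ 3 \<le> B \<longleftrightarrow> real k \<le> root 3 B" for k :: nat
  proof -
    have "real k ^ 3 \<le> B \<longleftrightarrow> root 3 (real k ^ 3) \<le> root 3 B" by (simp only: real_root_le_iff zero_less_numeral)
    also have "root 3 (real k ^ 3) = real k" by (rule real_root_pos2) auto
    finally show ?thesis .
  qed
  then have "KK B = {k::nat. 0 < k \<and> real k \<le> root 3 B}" unfolding KK_def by blast
  then show ?thesis using upto_eq by simp
qed

lemma E_alg: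
  fixes t u HK LK :: real
  assumes t0: "0 \<le> t" and u0: "0 \<le> u" and ut: "u \<le> t" "t \<le> u + 1"
    and HK: "0 \<le> HK - t" "HK - t \<le> 1"
    and LK: "\<bar>LK - u ^ 2 / 2\<bar> \<le> u + 1"
  shows "\<bar>3 * t * HK - 3 * LK - 3 / 2 * t ^ 2\<bar> \<le> 9 * t + 3"
proof -
  define e1 where "e1 = HK - t"
  define e2 where "e2 = LK - u ^ 2 / 2"
  have E: "3 * t * HK - 3 * LK - 3 / 2 * t ^ 2 = 3 / 2 * ((t - u) * (t + u)) + 3 * (t * e1) - 3 * e2"
    unfolding e1_def e2_def by (simp add: field_simps power2_eq_square)
  have f1: "0 \<le> t * e1" unfolding e1_def using t0 HK by simp
  have f1': "t * e1 \<le> t * 1" unfolding e1_def using mult_left_mono[of "HK - t" 1 t] t0 HK by simp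
  have f2: "0 \<le> (t - u) * (t + u)" using ut u0 by simp
  have f3: "(t - u) * (t + u) \<le> 1 * (t + u)" using ut u0 by (intro mult_right_mono) auto
  have f4: "\<bar>e2\<bar> \<le> u + 1" unfolding e2_def using LK .
  have f4': "e2 \<le> u + 1" "- e2 \<le> u + 1" using f4 by (auto simp: abs_le_iff)
  have f1'': "t * e1 \<le> t" using f1' by simp
  have f3': "(t - u) * (t + u) \<le> t + u" using f3 by simp
  show ?thesis unfolding E abs_le_iff using f1 f1'' f2 f3' f4' ut t0 u0 by (intro conjI) linarith+
qed

lemma G_main:
  assumes B: "B \<ge> 1" and CT: "CT \<ge> 0" "\<And>Y. Y \<ge> 1 \<Longrightarrow> \<bar>Tz Y\<bar> \<le> CT"
  shows "\<bar>(\<Sum>k\<in>KK B. (1 / real k) * Sq (sqrt (B / real k ^ 3))) - ln B ^ 2 / (12 * zeta_real 2)\<bar>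
           \<le> (CT + 2) * (1 + ln B)"
proof -
  define z where "z = zeta_real 2"
  have z1: "z \<ge> 1" unfolding z_def using zeta2_bounds by simp
  define Yk where "Yk = (\<lambda>k::nat. sqrt (B / real k ^ 3))"
  define HK where "HK = (\<Sum>k\<in>KK B. 1 / real k)"
  define LK where "LK = (\<Sum>k\<in>KK B. ln (real k) / real k)"
  define ST where "ST = (\<Sum>k\<in>KK B. Tz (Yk k) / real k)"
  have trm: "(1 / real k) * Sq (Yk k) = (1 / (2 * z)) * (ln B * (1 / real k) - 3 * (ln (real k) / real k)) + Tz (Yk k) / real k"
    if k: "k \<in> KK B" for k
  proof -
    have k0: "k > 0" "real k ^ 3 \<le> B" using k unfolding KK_def by auto
    have kp: "real k ^ 3 > 0" using k0 by simp
    have "ln (Yk k) = ln (B / real k ^ 3) / 2" unfolding Yk_def using kp B by (simp add: ln_sqrt)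
    also have "ln (B / real k ^ 3) = ln B - 3 * ln (real k)" using kp B k0 by (subst ln_div) (auto simp: ln_realpow)
    finally have lnY: "ln (Yk k) = (ln B - 3 * ln (real k)) / 2" .
    have "Sq (Yk k) = ln (Yk k) / z + Tz (Yk k)" unfolding Tz_def z_def by simp
    then show ?thesis unfolding lnY using k0 z1 by (simp add: field_simps)
  qed
  have "(\<Sum>k\<in>KK B. (1 / real k) * Sq (Yk k))
     = (\<Sum>k\<in>KK B. (1 / (2 * z)) * (ln B * (1 / real k) - 3 * (ln (real k) / real k)) + Tz (Yk k) / real k)"
    by (intro sum.cong refl trm)
  also have "\<dots> = (1 / (2 * z)) * (ln B * HK - 3 * LK) + ST"
  proof -
    have a1: "(\<Sum>k\<in>KK B. ln B * (1 / real k) - 3 * (ln (real k) / real k)) = ln B * HK - 3 * LK"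
      unfolding HK_def LK_def by (simp only: sum_subtractf sum_distrib_left)
    show ?thesis unfolding ST_def sum.distrib sum_distrib_left[symmetric] a1 ..
  qed
  finally have S: "(\<Sum>k\<in>KK B. (1 / real k) * Sq (Yk k)) = (1 / (2 * z)) * (ln B * HK - 3 * LK) + ST" .
  have HKb: "HK \<le> 1 + ln B" unfolding HK_def by (rule harmKK[OF B])
  have HK0: "0 \<le> HK" unfolding HK_def by (intro sum_nonneg) auto
  have "\<bar>ST\<bar> \<le> (\<Sum>k\<in>KK B. \<bar>Tz (Yk k) / real k\<bar>)" unfolding ST_def by (rule sum_abs)
  also have "\<dots> \<le> (\<Sum>k\<in>KK B. CT * (1 / real k))"
  proof (intro sum_mono)
    fix k assume k: "k \<in> KK B"
    have k0: "k > 0" "real k ^ 3 \<le> B" using k unfolding KK_def by auto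
    have "B / real k ^ 3 \<ge> 1" using k0 by (simp add: le_divide_eq)
    then have "Yk k \<ge> 1" unfolding Yk_def by simp
    then have "\<bar>Tz (Yk k)\<bar> \<le> CT" by (rule CT(2))
    then show "\<bar>Tz (Yk k) / real k\<bar> \<le> CT * (1 / real k)" using k0 by (simp add: abs_div divide_right_mono)
  qed
  also have "\<dots> = CT * HK" unfolding HK_def by (rule sum_distrib_left[symmetric])
  also have "\<dots> \<le> CT * (1 + ln B)" using HKb CT(1) by (intro mult_left_mono)
  finally have STb: "\<bar>ST\<bar> \<le> CT * (1 + ln B)" .
  define R where "R = root 3 B"
  define n where "n = nat \<lfloor>R\<rfloor>"
  have R1: "R \<ge> 1" unfolding R_def using B by simp
  have n1: "n \<ge> 1" unfolding n_def using R1 by linarith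
  have nR: "real n \<le> R" "R < real n + 1" unfolding n_def using R1 by linarith+
  have KKn: "KK B = {1..n}" unfolding n_def R_def by (rule KK_eq[OF B])
  define t where "t = ln R"
  define u where "u = ln (real n)"
  have t3: "ln B = 3 * t" unfolding t_def R_def using B by (simp add: ln_root)
  have t0: "0 \<le> t" unfolding t_def using R1 by simp
  have u0: "0 \<le> u" unfolding u_def using n1 by simp
  have ut: "u \<le> t" unfolding u_def t_def using nR n1 by simp
  have "real n \<ge> 1" using n1 by simp
  then have "R \<le> 2 * real n" using nR by linarith
  then have "t \<le> ln (2 * real n)" unfolding t_def using R1 by simp
  also have "\<dots> = ln 2 + u" unfolding u_def using n1 by (simp add: ln_mult)
  finally have tu: "t \<le> u + 1" using ln_2_less_1 by linarith
  have "HK = harm n" unfolding HK_def KKn harm_def by (simp add: divide_inverse)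
  then have HKt: "0 \<le> HK - t" "HK - t \<le> 1" using harm_floor[OF R1] unfolding t_def n_def by auto
  have LKu: "\<bar>LK - u ^ 2 / 2\<bar> \<le> u + 1" unfolding LK_def KKn u_def using lnk_sum[OF n1] .
  have Eb: "\<bar>3 * t * HK - 3 * LK - 3 / 2 * t ^ 2\<bar> \<le> 9 * t + 3" by (rule E_alg[OF t0 u0 ut tu HKt LKu])
  have eqE: "(1 / (2 * z)) * (ln B * HK - 3 * LK) - ln B ^ 2 / (12 * z)
        = (3 * t * HK - 3 * LK - 3 / 2 * t ^ 2) / (2 * z)"
    unfolding t3 using z1 by (simp add: field_simps power2_eq_square)
  have "\<bar>(3 * t * HK - 3 * LK - 3 / 2 * t ^ 2) / (2 * z)\<bar> \<le> (9 * t + 3) / 2"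
  proof -
    have "\<bar>(3 * t * HK - 3 * LK - 3 / 2 * t ^ 2) / (2 * z)\<bar> = \<bar>3 * t * HK - 3 * LK - 3 / 2 * t ^ 2\<bar> / (2 * z)"
      using z1 by (simp add: abs_div)
    also have "\<dots> \<le> (9 * t + 3) / (2 * z)" using Eb z1 by (intro divide_right_mono) auto
    also have "\<dots> \<le> (9 * t + 3) / 2" using z1 t0 by (intro divide_left_mono) auto
    finally show ?thesis .
  qed
  moreover have "(9 * t + 3) / 2 \<le> 2 * (1 + ln B)" unfolding t3 using t0 by simp
  ultimately have Emain: "\<bar>(1 / (2 * z)) * (ln B * HK - 3 * LK) - ln B ^ 2 / (12 * z)\<bar> \<le> 2 * (1 + ln B)"
    unfolding eqE by (rule order_trans)
  have "\<bar>(\<Sum>k\<in>KK B. (1 / real k) * Sq (Yk k)) - ln B ^ 2 / (12 * z)\<bar> \<le> CT * (1 + ln B) + 2 * (1 + ln B)"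
    unfolding S using Emain STb by linarith
  then show ?thesis unfolding Yk_def z_def by (simp add: algebra_simps)
qed

lemma main_bound:
  "\<exists>C. \<forall>B\<ge>1. \<bar>real (\<Sum>n\<in>{1..nat \<lfloor>B\<rfloor>}. subring_count n) - B * (ln B)^2 / (12 * zeta_real 2)\<bar>
      \<le> C * (B * (1 + ln B))"
proof -
  obtain CT where CT: "CT \<ge> 0" "\<And>Y. Y \<ge> 1 \<Longrightarrow> \<bar>Tz Y\<bar> \<le> CT" using Tz_bounded by blast
  show ?thesis
  proof (intro exI allI impI)
    fix B :: real assume B: "B \<ge> 1"
    define N where "N = nat \<lfloor>B\<rfloor>"
    define F where "F = real (\<Sum>p\<in>PP N. snd p * fst p^2 * (N div (snd p^2 * fst p^3)))"
    define Gs where "Gs = (\<Sum>p\<in>PP N. 1 / (real (snd p) * real (fst p)))"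
    have eF: "real (\<Sum>n\<in>{1..nat \<lfloor>B\<rfloor>}. subring_count n) = F"
      unfolding F_def N_def sum_subring_count U2_param ..
    have b1: "\<bar>F - B * Gs\<bar> \<le> 2 * (B * (1 + ln B))" unfolding F_def Gs_def N_def by (rule F_vs_G[OF B])
    have b2: "\<bar>Gs - ln B ^ 2 / (12 * zeta_real 2)\<bar> \<le> (CT + 2) * (1 + ln B)"
      unfolding Gs_def N_def G_eq[OF B] by (rule G_main[OF B CT])
    have B0: "B \<ge> 0" using B by simp
    have "\<bar>B * Gs - B * (ln B ^ 2 / (12 * zeta_real 2))\<bar> = B * \<bar>Gs - ln B ^ 2 / (12 * zeta_real 2)\<bar>"
    proof -
      have "B * Gs - B * (ln B ^ 2 / (12 * zeta_real 2)) = B * (Gs - ln B ^ 2 / (12 * zeta_real 2))"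
        by (rule right_diff_distrib[symmetric])
      then show ?thesis using B0 by (simp only: abs_mult abs_of_nonneg)
    qed
    also have "\<dots> \<le> B * ((CT + 2) * (1 + ln B))" using b2 B0 by (intro mult_left_mono)
    finally have b3: "\<bar>B * Gs - B * (ln B ^ 2 / (12 * zeta_real 2))\<bar> \<le> B * ((CT + 2) * (1 + ln B))" .
    have e2: "B * (ln B)^2 / (12 * zeta_real 2) = B * (ln B ^ 2 / (12 * zeta_real 2))" by simp
    have e3: "B * ((CT + 2) * (1 + ln B)) + 2 * (B * (1 + ln B)) = (CT + 4) * (B * (1 + ln B))"
      by (simp add: algebra_simps)
    have "\<bar>F - B * (ln B)^2 / (12 * zeta_real 2)\<bar> \<le> (CT + 4) * (B * (1 + ln B))"
      unfolding e2 e3[symmetric] using b1 b3 by linarith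
    then show "\<bar>real (\<Sum>n\<in>{1..nat \<lfloor>B\<rfloor>}. subring_count n) - B * (ln B)^2 / (12 * zeta_real 2)\<bar>
      \<le> (CT + 4) * (B * (1 + ln B))" unfolding eF .
  qed
qed

theorem corollary6:
  shows "(\<lambda>B::real. real (\<Sum>n\<in>{1..nat \<lfloor>B\<rfloor>}. subring_count n))
           \<sim>[at_top] (\<lambda>B. B * (ln B)^2 / (12 * zeta_real 2))"
proof (rule smallo_imp_asymp_equiv)
  define f where "f = (\<lambda>B::real. real (\<Sum>n\<in>{1..nat \<lfloor>B\<rfloor>}. subring_count n))"
  define g where "g = (\<lambda>B::real. B * (ln B)^2 / (12 * zeta_real 2))"
  obtain C where C: "\<And>B. B \<ge> 1 \<Longrightarrow> \<bar>f B - g B\<bar> \<le> C * (B * (1 + ln B))"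
    using main_bound unfolding f_def g_def by blast
  have "(\<lambda>B. f B - g B) \<in> O(\<lambda>B. B * (1 + ln B))"
  proof (rule bigoI)
    show "\<forall>\<^sub>F x in at_top. norm (f x - g x) \<le> C * norm (x * (1 + ln x))"
      using eventually_ge_at_top[of "1::real"]
    proof eventually_elim
      case (elim x)
      have "x * (1 + ln x) \<ge> 0" using elim by simp
      then show ?case using C[OF elim] by simp
    qed
  qed
  moreover have "(\<lambda>B::real. B * (1 + ln B)) \<in> o(g)"
  proof -
    have "zeta_real 2 > 0" using zeta2_bounds by simp
    then have "12 * zeta_real 2 > 0" by simp
    then show ?thesis unfolding g_def by real_asymp
  qed
  ultimately show "(\<lambda>B. f B - g B) \<in> o(g)" by (rule landau_o.big_small_trans)
qed


end
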